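(* Let $k\ge 1$ and, for $t\ge 2$, let $\mathcal{G}_t^{gr}$ be the Grassmann algebra $\langle 1,e_1,\dots,e_t\mid e_ie_j=-e_je_i\rangle$ with the grading whose even (odd) part is spanned by monomials in the $e_i$ of even (odd) length. Then: (1) $c_n^{gr,z}(\mathcal{G}_{2k}^{gr})=c_n^{gr,z}(\mathcal{G}_{2k+1}^{gr})=\sum_{1\le i\le 2k,\ i\text{ odd}}\binom{n}{i}$; (2) $\delta_n^{gr}(\mathcal{G}_{2k}^{gr})=\sum_{0\le i\le 2k,\ i\text{ even}}\binom{n}{i}$ and $\delta_n^{gr}(\mathcal{G}_{2k+1}^{gr})=\binom{n}{2k+1}+\delta_n^{gr}(\mathcal{G}_{2k}^{gr})$; (3) $\chi_n^{gr,z}(\mathcal{G}_{2k}^{gr})=\chi_n^{gr,z}(\mathcal{G}_{2k+1}^{gr})=\sum_{1\le i\le 2k,\ i\text{ odd}}\chi_{(n-i),(1^i)}$; (4) $\chi_n(\Delta^{gr}(\mathcal{G}_{2k}^{gr}))=\sum_{0\le i\le 2k,\ i\text{ even}}\chi_{(n-i),(1^i)}$ and $\chi_n(\Delta^{gr}(\mathcal{G}_{2k+1}^{gr}))=\chi_{(n-2k-1),(1^{2k+1})}+\sum_{0\le i\le 2k,\ i\text{ even}}\chi_{(n-i),(1^i)}$.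
   Context: $F$ is a field of characteristic zero. A superalgebra is an algebra $A=A_0\oplus A_1$ with $A_iA_j\subseteq A_{i+j\bmod 2}$; $Z(A)$ is the center. $F\langle Y,Z\rangle$ is the free algebra on even variables $y_1,y_2,\dots$ and odd variables $z_1,z_2,\dots$. $\mathrm{Id}^{gr}(A)$ is the set of graded identities; $C^{gr}(A)$ is the set of central graded polynomials (zero constant term, all evaluations with even variables in $A_0$ and odd in $A_1$ lie in $Z(A)$). $P_n^{gr}$ is the span of monomials $w_{\sigma(1)}\cdots w_{\sigma(n)}$, $\sigma\in S_n$, $w_i\in\{y_i,z_i\}$; $c_n^{gr,z}(A)=\dim P_n^{gr}/(P_n^{gr}\cap C^{gr}(A))$, $\delta_n^{gr}(A)=\dim(P_n^{gr}\cap C^{gr}(A))/(P_n^{gr}\cap\mathrm{Id}^{gr}(A))$. $\mathbb{Z}_2\wr S_n$ acts on $P_n^{gr}$ by $(a_1,\dots,a_n;\sigma)y_i=y_{\sigma(i)}$, $(a_1,\dots,a_n;\sigma)z_i=a_{\sigma(i)}z_{\sigma(i)}$ ($a_j=\pm1$); $\chi_n^{gr,z}(A)$ and $\chi_n(\Delta^{gr}(A))$ denote the characters of $P_n^{gr}/(P_n^{gr}\cap C^{gr}(A))$ and $(P_n^{gr}\cap C^{gr}(A))/(P_n^{gr}\cap\mathrm{Id}^{gr}(A))$. $\chi_{\lambda,\mu}$ is the irreducible $\mathbb{Z}_2\wr S_n$-character indexed by $\lambda\vdash n-r$ (even variables) and $\mu\vdash r$ (odd variables); $1^i$ denotes the partition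 with $i$ parts equal to $1$. *)

theory Defs
  imports Complex_Main "HOL-Library.Function_Algebras" "HOL-Combinatorics.Permutations"
begin

text \<open>A superalgebra over F is given by a carrier A (an additive group inside 'a),
  its even and odd parts A0, A1, a multiplication mul, a unit one and a scalar
  multiplication smul by elements of the field 'f.\<close>

definition center :: "'a set \<Rightarrow> ('a \<Rightarrow> 'a \<Rightarrow> 'a) \<Rightarrow> 'a set" where
  "center A mul = {z \<in> A. \<forall>a\<in>A. mul z a = mul a z}"

fun mprod :: "('a \<Rightarrow> 'a \<Rightarrow> 'a) \<Rightarrow> 'a \<Rightarrow> 'a list \<Rightarrow> 'a" where
  "mprod mul one [] = one"
| "mprod mul one [x] = x"
| "mprod mul one (x # xs) = mul x (mprod mul one xs)"

text \<open>Variables are indexed 0..n-1.  A monomial w_{pi 0} ... w_{pi (n-1)} of P_n^gr is encoded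
  by the pair (S, pi), where pi permutes {..<n} and S is the set of indices i with w_i = z_i
  (odd variable); for i not in S, w_i = y_i (even variable).  These monomials form a basis of
  P_n^gr, so an element of P_n^gr is a coefficient function on such pairs.\<close>

definition mmonos :: "nat \<Rightarrow> (nat set \<times> (nat \<Rightarrow> nat)) set" where
  "mmonos n = {(S, pi). S \<subseteq> {..<n} \<and> pi permutes {..<n}}"

type_synonym 'f mpoly = "(nat set \<times> (nat \<Rightarrow> nat)) \<Rightarrow> 'f"

definition Pgr :: "nat \<Rightarrow> 'f::field mpoly set" where
  "Pgr n = {p. \<forall>m. m \<notin> mmonos n \<longrightarrow> p m = 0}"

definition pscale :: "'f::field \<Rightarrow> 'f mpoly \<Rightarrow> 'f mpoly" where
  "pscale c p = (\<lambda>m. c * p m)"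

text \<open>Evaluation: y_i \<mapsto> b i (even), z_i \<mapsto> c i (odd).\<close>
definition evalP :: "('a::ab_group_add \<Rightarrow> 'a \<Rightarrow> 'a) \<Rightarrow> 'a \<Rightarrow> ('f \<Rightarrow> 'a \<Rightarrow> 'a) \<Rightarrow> nat
    \<Rightarrow> 'f mpoly \<Rightarrow> (nat \<Rightarrow> 'a) \<Rightarrow> (nat \<Rightarrow> 'a) \<Rightarrow> 'a" where
  "evalP mul one smul n p b c =
     (\<Sum>(S, pi)\<in>mmonos n. smul (p (S, pi))
        (mprod mul one (map (\<lambda>j. if pi j \<in> S then c (pi j) else b (pi j)) [0..<n])))"

definition IdP :: "('a::ab_group_add \<Rightarrow> 'a \<Rightarrow> 'a) \<Rightarrow> 'a \<Rightarrow> ('f::field \<Rightarrow> 'a \<Rightarrow> 'a)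
    \<Rightarrow> 'a set \<Rightarrow> 'a set \<Rightarrow> nat \<Rightarrow> 'f mpoly set" where
  "IdP mul one smul A0 A1 n = {p \<in> Pgr n. \<forall>b c. (\<forall>i. b i \<in> A0) \<longrightarrow> (\<forall>i. c i \<in> A1)
       \<longrightarrow> evalP mul one smul n p b c = 0}"

text \<open>P_n^gr \<inter> C^gr(A) (for n \<ge> 1 the constant term is automatically zero)\<close>
definition CP :: "('a::ab_group_add \<Rightarrow> 'a \<Rightarrow> 'a) \<Rightarrow> 'a \<Rightarrow> ('f::field \<Rightarrow> 'a \<Rightarrow> 'a)
    \<Rightarrow> 'a set \<Rightarrow> 'a set \<Rightarrow> 'a set \<Rightarrow> nat \<Rightarrow> 'f mpoly set" where
  "CP mul one smul A A0 A1 n = {p \<in> Pgr n. \<forall>b c. (\<forall>i. b i \<in> A0) \<longrightarrow> (\<forall>i. c i \<in> A1)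
       \<longrightarrow> evalP mul one smul n p b c \<in> center A mul}"

text \<open>Dimension of a quotient V/W of finite-dimensional spaces, W \<subseteq> V.\<close>
definition qdim :: "'f::field mpoly set \<Rightarrow> 'f mpoly set \<Rightarrow> nat" where
  "qdim V W = vector_space.dim pscale V - vector_space.dim pscale W"

text \<open>The element (a_0,...,a_{n-1}; sigma) sends y_i to y_{sigma i} and z_i to a_{sigma i} z_{sigma i};
  hence the monomial (S, pi) goes to (prod_{i in S} a_{sigma i}) times the monomial (sigma ` S, sigma o pi).\<close>
definition act :: "(nat \<Rightarrow> 'f::field) \<Rightarrow> (nat \<Rightarrow> nat) \<Rightarrow> nat \<Rightarrow> 'f mpoly \<Rightarrow> 'f mpoly" where
  "act a sigma n p = (\<lambda>(S', pi'). if (S', pi') \<in> mmonos n then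
      (\<Prod>i\<in>S'. a i) * p (inv sigma ` S', inv sigma \<circ> pi') else 0)"

definition trace_on :: "'f::field mpoly set \<Rightarrow> ('f mpoly \<Rightarrow> 'f mpoly) \<Rightarrow> 'f" where
  "trace_on W T = (let B = (SOME B. B \<subseteq> W \<and> module.independent pscale B \<and> module.span pscale B = W)
     in \<Sum>v\<in>B. module.representation pscale B (T v) v)"

text \<open>Character of the quotient module V/W (W \<subseteq> V invariant) at g = (a; sigma).\<close>
definition qchar :: "nat \<Rightarrow> 'f::field mpoly set \<Rightarrow> 'f mpoly set \<Rightarrow> (nat \<Rightarrow> 'f) \<Rightarrow> (nat \<Rightarrow> nat) \<Rightarrow> 'f" where
  "qchar n V W a sigma = trace_on V (act a sigma n) - trace_on W (act a sigma n)"

text \<open>The irreducible character chi_{(n-i),(1^i)} of Z_2 wr S_n: induced from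
  (Z_2 wr S_{n-i}) x (Z_2 wr S_i) of the product of the trivial character on the first factor
  (lambda = (n-i), Z_2 acting trivially) and, on the second factor, the sign character of S_i
  (mu = (1^i)) with each Z_2 acting by -1.  Cosets correspond to i-subsets T of {..<n}
  (positions of the odd part); the induced character formula reads as follows.\<close>
definition chi_row_col :: "nat \<Rightarrow> nat \<Rightarrow> (nat \<Rightarrow> 'f::field) \<Rightarrow> (nat \<Rightarrow> nat) \<Rightarrow> 'f" where
  "chi_row_col n i a sigma =
     (\<Sum>T\<in>{T. T \<subseteq> {..<n} \<and> card T = i \<and> sigma ` T = T}.
        (\<Prod>j\<in>T. a j) * of_int (sign_on T sigma))"

text \<open>Elements are coefficient functions on finite subsets U of {1..t}, U standing for the monomial
  e_{u_1} ... e_{u_r} with u_1 < ... < u_r.\<close>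
type_synonym 'f grass = "nat set \<Rightarrow> 'f"

definition grass :: "nat \<Rightarrow> 'f::field grass set" where
  "grass t = {x. \<forall>U. x U \<noteq> 0 \<longrightarrow> U \<subseteq> {1..t}}"

definition grass0 :: "nat \<Rightarrow> 'f::field grass set" where
  "grass0 t = {x \<in> grass t. \<forall>U. x U \<noteq> 0 \<longrightarrow> even (card U)}"

definition grass1 :: "nat \<Rightarrow> 'f::field grass set" where
  "grass1 t = {x \<in> grass t. \<forall>U. x U \<noteq> 0 \<longrightarrow> odd (card U)}"

definition gsign :: "nat set \<Rightarrow> nat set \<Rightarrow> 'f::field" where
  "gsign S T = (-1) ^ card {(s, u). s \<in> S \<and> u \<in> T \<and> u < s}"

definition gmul :: "'f::field grass \<Rightarrow> 'f grass \<Rightarrow> 'f grass" where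
  "gmul x y = (\<lambda>U. \<Sum>S\<in>Pow U. gsign S (U - S) * x S * y (U - S))"

definition gone :: "'f::field grass" where
  "gone = (\<lambda>U. if U = {} then 1 else 0)"

definition gsmul :: "'f::field \<Rightarrow> 'f grass \<Rightarrow> 'f grass" where
  "gsmul c x = (\<lambda>U. c * x U)"

definition CPG :: "'f::field itself \<Rightarrow> nat \<Rightarrow> nat \<Rightarrow> 'f mpoly set" where
  "CPG _ t n = CP gmul gone gsmul (grass t) (grass0 t) (grass1 t) n"

definition IdPG :: "'f::field itself \<Rightarrow> nat \<Rightarrow> nat \<Rightarrow> 'f mpoly set" where
  "IdPG _ t n = IdP gmul gone gsmul (grass0 t) (grass1 t) n"

definition cgrz :: "'f::field itself \<Rightarrow> nat \<Rightarrow> nat \<Rightarrow> nat" where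
  "cgrz F t n = qdim (Pgr n :: 'f mpoly set) (CPG F t n)"

definition deltagr :: "'f::field itself \<Rightarrow> nat \<Rightarrow> nat \<Rightarrow> nat" where
  "deltagr F t n = qdim (CPG F t n) (IdPG F t n)"

definition chigrz :: "nat \<Rightarrow> nat \<Rightarrow> (nat \<Rightarrow> 'f::field) \<Rightarrow> (nat \<Rightarrow> nat) \<Rightarrow> 'f" where
  "chigrz t n a sigma = qchar n (Pgr n) (CPG TYPE('f) t n) a sigma"

definition chiDelta :: "nat \<Rightarrow> nat \<Rightarrow> (nat \<Rightarrow> 'f::field) \<Rightarrow> (nat \<Rightarrow> nat) \<Rightarrow> 'f" where
  "chiDelta t n a sigma = qchar n (CPG TYPE('f) t n) (IdPG TYPE('f) t n) a sigma"

end

theory Submission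
  imports Defs
begin

lemma fin_pairs: "finite S \<Longrightarrow> finite T \<Longrightarrow> finite {(s, u). s \<in> S \<and> u \<in> T \<and> u < s}"
  by (rule finite_subset[of _ "S \<times> T"]) auto

lemma gsign_empty1 [simp]: "gsign {} T = 1" and gsign_empty2 [simp]: "gsign S {} = 1"
  by (simp_all add: gsign_def)

lemma gsign_sq: "(gsign S T :: 'f::field) * gsign S T = 1"
  by (simp add: gsign_def power_add[symmetric] mult_2[symmetric] power_mult)

lemma gsign_nz: "(gsign S T :: 'f::field) \<noteq> 0"
  using gsign_sq[of S T] by (metis mult_zero_left zero_neq_one)

lemma gsign_Un1:
  assumes "finite A" "finite B" "finite C" "A \<inter> B = {}"
  shows "(gsign (A \<union> B) C :: 'f::field) = gsign A C * gsign B C"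
proof -
  have "{(s, u). s \<in> A \<union> B \<and> u \<in> C \<and> u < s} =
        {(s, u). s \<in> A \<and> u \<in> C \<and> u < s} \<union> {(s, u). s \<in> B \<and> u \<in> C \<and> u < s}" by auto
  moreover have "card (\<dots>) = card {(s, u). s \<in> A \<and> u \<in> C \<and> u < s} + card {(s, u). s \<in> B \<and> u \<in> C \<and> u < s}"
    by (rule card_Un_disjoint) (use assms in \<open>auto intro: fin_pairs\<close>)
  ultimately show ?thesis by (simp add: gsign_def power_add)
qed

lemma gsign_Un2:
  assumes "finite A" "finite B" "finite C" "B \<inter> C = {}"
  shows "(gsign A (B \<union> C) :: 'f::field) = gsign A B * gsign A C"
proof -
  have "{(s, u). s \<in> A \<and> u \<in> B \<union> C \<and> u < s} =
        {(s, u). s \<in> A \<and> u \<in> B \<and> u < s} \<union> {(s, u). s \<in> A \<and> u \<in> C \<and> u < s}" by auto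
  moreover have "card (\<dots>) = card {(s, u). s \<in> A \<and> u \<in> B \<and> u < s} + card {(s, u). s \<in> A \<and> u \<in> C \<and> u < s}"
    by (rule card_Un_disjoint) (use assms in \<open>auto intro: fin_pairs\<close>)
  ultimately show ?thesis by (simp add: gsign_def power_add)
qed

lemma gsign_swap:
  assumes "finite S" "finite T" "S \<inter> T = {}"
  shows "(gsign S T :: 'f::field) * gsign T S = (-1) ^ (card S * card T)"
proof -
  let ?A = "{(s, u). s \<in> S \<and> u \<in> T \<and> u < s}"
  let ?B = "{(s, u). s \<in> S \<and> u \<in> T \<and> s < u}"
  let ?C = "{(s, u). s \<in> T \<and> u \<in> S \<and> u < s}"
  have "?C = (\<lambda>(x, y). (y, x)) ` ?B" by auto
  moreover have "inj_on (\<lambda>(x, y). (y, x)) ?B" by (auto simp: inj_on_def)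
  ultimately have c: "card ?C = card ?B" by (simp add: card_image)
  have "S \<times> T = ?A \<union> ?B" using assms(3) by (auto simp: linorder_neq_iff)
  moreover have "card (?A \<union> ?B) = card ?A + card ?B"
    by (rule card_Un_disjoint) (use assms in \<open>auto intro: finite_subset[of _ "S \<times> T"]\<close>)
  ultimately have "card ?A + card ?C = card S * card T" using c by (metis card_cartesian_product)
  then show ?thesis by (simp add: gsign_def power_add[symmetric])
qed

lemma gsign_pm1: "(gsign S T :: 'f::field) = 1 \<or> gsign S T = -1"
  by (cases "even (card {(s, u). s \<in> S \<and> u \<in> T \<and> u < s})") (simp_all add: gsign_def)

lemma sum_Pow_infinite: "infinite U \<Longrightarrow> sum f (Pow U) = 0"
  by simp

lemma gmul_infinite: "infinite U \<Longrightarrow> gmul x y U = 0"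
  by (simp add: gmul_def)

lemma Pow_compl_bij: "finite U \<Longrightarrow> (\<Sum>S\<in>Pow U. f S) = (\<Sum>S\<in>Pow U. f (U - S))"
  by (rule sum.reindex_bij_witness[where i="\<lambda>S. U - S" and j="\<lambda>S. U - S"]) (auto simp: Diff_Diff_Int inf.absorb2)

lemma gmul_swap:
  assumes "\<And>S V. finite S \<Longrightarrow> finite V \<Longrightarrow> S \<inter> V = {} \<Longrightarrow> x S \<noteq> 0 \<Longrightarrow> a V \<noteq> 0
             \<Longrightarrow> ((-1) ^ (card S * card V) :: 'f::field) = e"
  shows "gmul x a = gsmul e (gmul a (x :: 'f grass))"
proof
  fix U :: "nat set"
  show "gmul x a U = gsmul e (gmul a x) U"
  proof (cases "finite U")
    case False then show ?thesis by (simp add: gmul_infinite gsmul_def)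
  next
    case True
    have "gmul a x U = (\<Sum>S\<in>Pow U. gsign (U - S) (U - (U - S)) * a (U - S) * x (U - (U - S)))"
      unfolding gmul_def by (rule Pow_compl_bij[OF True])
    also have "\<dots> = (\<Sum>S\<in>Pow U. gsign (U - S) S * a (U - S) * x S)"
      by (rule sum.cong) (auto simp: Diff_Diff_Int Int_absorb1)
    finally have ax: "gmul a x U = \<dots>" .
    have "gmul x a U = (\<Sum>S\<in>Pow U. e * (gsign (U - S) S * a (U - S) * x S))"
      unfolding gmul_def
    proof (rule sum.cong[OF refl])
      fix S assume S: "S \<in> Pow U"
      show "gsign S (U - S) * x S * a (U - S) = e * (gsign (U - S) S * a (U - S) * x S)"
      proof (cases "x S = 0 \<or> a (U - S) = 0")
        case True then show ?thesis by auto
      next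
        case False
        have fin: "finite S" "finite (U - S)" using True S finite_subset by auto
        have ee: "(-1) ^ (card S * card (U - S)) = e"
          using assms[OF fin] False by auto
        have "gsign S (U - S) * gsign (U - S) S = e" using gsign_swap[OF fin] ee by auto
        then have "gsign S (U - S) = e * gsign (U - S) S"
          using gsign_sq[of "U - S" S] by (metis mult.assoc mult.right_neutral)
        then show ?thesis by simp
      qed
    qed
    then show ?thesis by (simp add: ax gsmul_def sum_distrib_left)
  qed
qed

lemma gmul_assoc: "gmul (gmul x y) z = gmul x (gmul y (z :: 'f::field grass))"
proof
  fix U :: "nat set"
  show "gmul (gmul x y) z U = gmul x (gmul y z) U"
  proof (cases "finite U")
    case False then show ?thesis by (simp add: gmul_infinite)
  next
    case True
    define F where "F = (\<lambda>(R, Q). gsign R Q * gsign R (U - R - Q) * gsign Q (U - R - Q) *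
        x R * y Q * z (U - R - Q))"
    have "gmul (gmul x y) z U = (\<Sum>S\<in>Pow U. \<Sum>R\<in>Pow S. gsign S (U - S) * (gsign R (S - R) * x R * y (S - R)) * z (U - S))"
      unfolding gmul_def by (simp add: sum_distrib_left sum_distrib_right)
    also have "\<dots> = (\<Sum>(S, R)\<in>Sigma (Pow U) Pow. gsign S (U - S) * (gsign R (S - R) * x R * y (S - R)) * z (U - S))"
      by (rule sum.Sigma) (use True in \<open>auto intro: finite_subset\<close>)
    also have "\<dots> = (\<Sum>(R, Q)\<in>Sigma (Pow U) (\<lambda>R. Pow (U - R)). F (R, Q))"
    proof -
      have eq: "F (R, S - R) = gsign S (U - S) * (gsign R (S - R) * x R * y (S - R)) * z (U - S)"
        if "R \<subseteq> S" "S \<subseteq> U" for R S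
      proof -
        have fin: "finite R" "finite (S - R)" "finite (U - S)" using that True by (auto intro: finite_subset)
        have e1: "U - R - (S - R) = U - S" using that by auto
        have e2: "S = R \<union> (S - R)" using that by auto
        have "gsign S (U - S) = (gsign R (U - S) * gsign (S - R) (U - S) :: 'f)"
          using gsign_Un1[OF fin] e2 by (metis Diff_disjoint)
        then show ?thesis by (simp add: F_def e1 algebra_simps)
      qed
      show ?thesis
        by (rule sum.reindex_bij_witness[where i="\<lambda>(R, Q). (R \<union> Q, R)" and j="\<lambda>(S, R). (R, S - R)"])
           (auto simp: eq)
    qed
    also have "\<dots> = (\<Sum>R\<in>Pow U. \<Sum>Q\<in>Pow (U - R). F (R, Q))"
      by (rule sum.Sigma[symmetric]) (use True in \<open>auto intro: finite_subset\<close>)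
    also have "\<dots> = gmul x (gmul y z) U"
      unfolding gmul_def
    proof (rule sum.cong[OF refl])
      fix R assume R: "R \<in> Pow U"
      have "gsign R (U - R) * x R * (\<Sum>Q\<in>Pow (U - R). gsign Q (U - R - Q) * y Q * z (U - R - Q))
          = (\<Sum>Q\<in>Pow (U - R). gsign R (U - R) * x R * (gsign Q (U - R - Q) * y Q * z (U - R - Q)))"
        by (simp add: sum_distrib_left)
      also have "\<dots> = (\<Sum>Q\<in>Pow (U - R). F (R, Q))"
      proof (rule sum.cong[OF refl])
        fix Q assume Q: "Q \<in> Pow (U - R)"
        have fin: "finite R" "finite Q" "finite (U - R - Q)" using R Q True by (auto intro: finite_subset)
        have "U - R = Q \<union> (U - R - Q)" using Q by auto
        then have "gsign R (U - R) = (gsign R Q * gsign R (U - R - Q) :: 'f)"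
          using gsign_Un2[OF fin] by (metis Diff_disjoint)
        then show "gsign R (U - R) * x R * (gsign Q (U - R - Q) * y Q * z (U - R - Q)) = F (R, Q)"
          by (simp add: F_def algebra_simps)
      qed
      finally show "(\<Sum>Q\<in>Pow (U - R). F (R, Q)) = gsign R (U - R) * x R * (\<Sum>S\<in>Pow (U - R). gsign S (U - R - S) * y S * z (U - R - S))"
        by simp
    qed
    finally show ?thesis .
  qed
qed

definition hom :: "'f::field grass \<Rightarrow> bool \<Rightarrow> bool" where
  "hom x b \<longleftrightarrow> (\<forall>U. x U \<noteq> 0 \<longrightarrow> odd (card U) = b)"

definition lowdeg :: "nat \<Rightarrow> 'f::field grass \<Rightarrow> bool" where
  "lowdeg d x \<longleftrightarrow> (\<forall>U. x U \<noteq> 0 \<longrightarrow> d \<le> card U)"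

definition gmono :: "nat set \<Rightarrow> 'f::field grass" where
  "gmono A = (\<lambda>U. if U = A then 1 else 0)"

lemma grass_finite: "x \<in> grass t \<Longrightarrow> x U \<noteq> 0 \<Longrightarrow> finite U"
  unfolding grass_def by (auto intro: finite_subset)

lemma gmul_one_left:
  assumes "x \<in> grass t" shows "gmul gone x = x"
proof
  fix U show "gmul gone x U = x U"
  proof (cases "finite U")
    case False then show ?thesis using grass_finite[OF assms] by (auto simp: gmul_infinite)
  next
    case True
    have "gmul gone x U = (\<Sum>S\<in>Pow U. if S = {} then x U else 0)"
      unfolding gmul_def by (rule sum.cong) (auto simp: gone_def)
    then show ?thesis using True by simp
  qed
qed

lemma gmul_one_right:
  assumes "x \<in> grass t" shows "gmul x gone = x"
proof
  fix U show "gmul x gone U = x U"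
  proof (cases "finite U")
    case False then show ?thesis using grass_finite[OF assms] by (auto simp: gmul_infinite)
  next
    case True
    have "gmul x gone U = (\<Sum>S\<in>Pow U. if S = U then x U else 0)"
      unfolding gmul_def by (rule sum.cong) (auto simp: gone_def)
    then show ?thesis using True by simp
  qed
qed

lemma gmul_gsmul_left: "gmul (gsmul c x) y = gsmul c (gmul x y)"
  by (simp add: gmul_def gsmul_def fun_eq_iff sum_distrib_left algebra_simps)

lemma gmul_gsmul_right: "gmul x (gsmul c y) = gsmul c (gmul x y)"
  by (simp add: gmul_def gsmul_def fun_eq_iff sum_distrib_left algebra_simps)

lemma gmul_add_left: "gmul (x + x') y = gmul x y + gmul x' y"
  by (simp add: gmul_def fun_eq_iff sum.distrib algebra_simps)

lemma gmul_add_right: "gmul x (y + y') = gmul x y + gmul x y'"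
  by (simp add: gmul_def fun_eq_iff sum.distrib algebra_simps)

lemma gmul_zero_left [simp]: "gmul 0 y = 0" and gmul_zero_right [simp]: "gmul x 0 = 0"
  by (simp_all add: gmul_def fun_eq_iff)

lemma gmul_sum_left: "gmul (\<Sum>i\<in>I. f i) y = (\<Sum>i\<in>I. gmul (f i) y)"
proof (induction I rule: infinite_finite_induct)
  case (infinite A) then show ?case by (metis gmul_zero_left sum.infinite)
next
  case empty then show ?case by (metis gmul_zero_left sum.empty)
next
  case (insert x F) then show ?case by (metis gmul_add_left sum.insert)
qed

lemma gmul_sum_right: "gmul y (\<Sum>i\<in>I. f i) = (\<Sum>i\<in>I. gmul y (f i))"
proof (induction I rule: infinite_finite_induct)
  case (infinite A) then show ?case by (metis gmul_zero_right sum.infinite)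
next
  case empty then show ?case by (metis gmul_zero_right sum.empty)
next
  case (insert x F) then show ?case by (metis gmul_add_right sum.insert)
qed

lemma gsmul_gsmul [simp]: "gsmul a (gsmul b x) = gsmul (a * b) x"
  by (simp add: gsmul_def fun_eq_iff)

lemma gsmul_one [simp]: "gsmul 1 x = x"
  by (simp add: gsmul_def)

lemma gsmul_zero [simp]: "gsmul c 0 = 0"
  by (simp add: gsmul_def fun_eq_iff)

lemma gsmul_zero_left [simp]: "gsmul 0 x = 0"
  by (simp add: gsmul_def fun_eq_iff)

lemma sum_fun_apply: "(\<Sum>i\<in>I. f i) U = (\<Sum>i\<in>I. f i U)"
  by (induction I rule: infinite_finite_induct) simp_all

lemma gsmul_sum_left: "gsmul (\<Sum>i\<in>I. c i) x = (\<Sum>i\<in>I. gsmul (c i) x)"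
  by (simp add: gsmul_def fun_eq_iff sum_fun_apply sum_distrib_right)

lemma gmul_nz:
  assumes "gmul x y U \<noteq> 0"
  shows "finite U \<and> (\<exists>S\<subseteq>U. x S \<noteq> 0 \<and> y (U - S) \<noteq> 0)"
proof -
  have "finite U" using assms gmul_infinite by blast
  moreover obtain S where "S \<in> Pow U" "gsign S (U - S) * x S * y (U - S) \<noteq> 0"
    using assms unfolding gmul_def by (meson sum.not_neutral_contains_not_neutral)
  ultimately show ?thesis by auto
qed

lemma gmul_grass: "x \<in> grass t \<Longrightarrow> y \<in> grass t \<Longrightarrow> gmul x y \<in> grass t"
proof -
  assume a: "x \<in> grass t" "y \<in> grass t"
  { fix U assume "gmul x y U \<noteq> 0"
    from gmul_nz[OF this] obtain S where S: "S \<subseteq> U" "x S \<noteq> 0" "y (U - S) \<noteq> 0" by blast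
    then have "S \<subseteq> {1..t}" "U - S \<subseteq> {1..t}" using a by (auto simp: grass_def)
    then have "U \<subseteq> {1..t}" by blast }
  then show ?thesis by (auto simp: grass_def)
qed

lemma gone_grass: "gone \<in> grass t" and gone_hom: "hom gone False"
  by (auto simp: grass_def gone_def hom_def)

lemma zero_grass: "0 \<in> grass t" and zero_hom: "hom 0 b"
  by (auto simp: grass_def hom_def)

lemma gsmul_grass: "x \<in> grass t \<Longrightarrow> gsmul c x \<in> grass t"
  by (auto simp: grass_def gsmul_def)

lemma add_grass: "x \<in> grass t \<Longrightarrow> y \<in> grass t \<Longrightarrow> x + y \<in> grass t"
proof -
  assume a: "x \<in> grass t" "y \<in> grass t"
  { fix U assume "(x + y) U \<noteq> 0"
    then have "x U \<noteq> 0 \<or> y U \<noteq> 0" by auto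
    then have "U \<subseteq> {1..t}" using a unfolding grass_def by blast }
  then show ?thesis unfolding grass_def by blast
qed

lemma sum_grass: "(\<And>i. i \<in> I \<Longrightarrow> f i \<in> grass t) \<Longrightarrow> (\<Sum>i\<in>I. f i) \<in> grass t"
  by (induction I rule: infinite_finite_induct) (auto simp: zero_grass add_grass)

lemma gmul_hom:
  assumes "hom x b1" "hom y b2" shows "hom (gmul x y) (b1 \<noteq> b2)"
  unfolding hom_def
proof (intro allI impI)
  fix U assume "gmul x y U \<noteq> 0"
  from gmul_nz[OF this] obtain S where S: "finite U" "S \<subseteq> U" "x S \<noteq> 0" "y (U - S) \<noteq> 0" by blast
  have "card U = card S + card (U - S)" using S by (metis card_Diff_subset card_mono diff_add_inverse2 finite_subset le_add_diff_inverse2 add.commute)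
  then show "odd (card U) = (b1 \<noteq> b2)" using assms S unfolding hom_def by auto
qed

lemma gmul_lowdeg:
  assumes "lowdeg d1 x" "lowdeg d2 y" shows "lowdeg (d1 + d2) (gmul x y)"
  unfolding lowdeg_def
proof (intro allI impI)
  fix U assume "gmul x y U \<noteq> 0"
  from gmul_nz[OF this] obtain S where S: "finite U" "S \<subseteq> U" "x S \<noteq> 0" "y (U - S) \<noteq> 0" by blast
  have "card U = card S + card (U - S)" using S by (metis card_Diff_subset card_mono diff_add_inverse2 finite_subset le_add_diff_inverse2 add.commute)
  then show "d1 + d2 \<le> card U" using assms S unfolding lowdeg_def by (metis add_le_mono)
qed

lemma hom_lowdeg: "hom x True \<Longrightarrow> lowdeg 1 x"
  unfolding hom_def lowdeg_def by (metis One_nat_def Suc_leI odd_pos)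

lemma lowdeg0: "lowdeg 0 x"
  by (simp add: lowdeg_def)

lemma grass_lowdeg_zero: "x \<in> grass t \<Longrightarrow> lowdeg d x \<Longrightarrow> t < d \<Longrightarrow> x = 0"
proof (rule ext, rule ccontr)
  fix U assume a: "x \<in> grass t" "lowdeg d x" "t < d" "x U \<noteq> 0 U"
  then have "U \<subseteq> {1..t}" "d \<le> card U" by (auto simp: grass_def lowdeg_def)
  then have "card U \<le> t" by (metis card_atLeastAtMost card_mono diff_Suc_1 finite_atLeastAtMost)
  then show False using a \<open>d \<le> card U\<close> by linarith
qed

lemma gmul_hom_comm:
  assumes "hom x b1" "hom y b2"
  shows "gmul x y = gsmul (if b1 \<and> b2 then -1 else 1) (gmul y x)"
proof (rule gmul_swap)
  fix S V assume "x S \<noteq> 0" "y V \<noteq> 0"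
  then have "odd (card S) = b1" "odd (card V) = b2" using assms by (auto simp: hom_def)
  then show "(-1) ^ (card S * card V) = (if b1 \<and> b2 then -1 else (1::'a))" by auto
qed

lemma mprod_Cons:
  assumes "x \<in> grass t" shows "mprod gmul gone (x # xs) = gmul x (mprod gmul gone xs)"
  using assms by (cases xs) (simp_all add: gmul_one_right)

lemma mprod_props:
  assumes "\<And>i. i \<in> set L \<Longrightarrow> f i \<in> grass t \<and> hom (f i) (i \<in> S)"
  shows "mprod gmul gone (map f L) \<in> grass t \<and> hom (mprod gmul gone (map f L)) (odd (length (filter (\<lambda>i. i \<in> S) L)))
         \<and> lowdeg (length (filter (\<lambda>i. i \<in> S) L)) (mprod gmul gone (map f L))"
  using assms
proof (induction L)
  case Nil then show ?case by (simp add: gone_grass gone_hom lowdeg0)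
next
  case (Cons x L)
  then have IH: "mprod gmul gone (map f L) \<in> grass t"
      "hom (mprod gmul gone (map f L)) (odd (length (filter (\<lambda>i. i \<in> S) L)))"
      "lowdeg (length (filter (\<lambda>i. i \<in> S) L)) (mprod gmul gone (map f L))" by auto
  have fx: "f x \<in> grass t" "hom (f x) (x \<in> S)" using Cons.prems by auto
  have ld: "lowdeg (if x \<in> S then 1 else 0) (f x)" using fx(2) hom_lowdeg lowdeg0 by auto
  have e: "mprod gmul gone (map f (x # L)) = gmul (f x) (mprod gmul gone (map f L))"
    using mprod_Cons[OF fx(1)] by simp
  show ?case unfolding e using gmul_grass[OF fx(1) IH(1)] gmul_hom[OF fx(2) IH(2)] gmul_lowdeg[OF ld IH(3)]
    by (auto split: if_splits)
qed

fun sgnL :: "nat set \<Rightarrow> nat list \<Rightarrow> 'f::field" where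
  "sgnL S [] = 1"
| "sgnL S (x # L) = prod_list (map (\<lambda>y. if x \<in> S \<and> y \<in> S \<and> y < x then -1 else 1) L) * sgnL S L"

lemma prod_list_ones: "(\<And>z. z \<in> set L \<Longrightarrow> h z = 1) \<Longrightarrow> prod_list (map h L) = (1::'a::comm_monoid_mult)"
  by (induction L) auto

lemma prod_list_sort: "prod_list (map h (sort L)) = (prod_list (map h L) :: 'a::comm_monoid_mult)"
proof -
  have "mset (map h (sort L)) = mset (map h L)" by simp
  then show ?thesis by (metis prod_mset_prod_list)
qed

lemma insort_prod:
  fixes f :: "nat \<Rightarrow> 'f::field grass"
  assumes "sorted M" "distinct (x # M)" "\<And>i. i \<in> set (x # M) \<Longrightarrow> f i \<in> grass t \<and> hom (f i) (i \<in> S)"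
  shows "gmul (f x) (mprod gmul gone (map f M)) =
    gsmul (prod_list (map (\<lambda>y. if x \<in> S \<and> y \<in> S \<and> y < x then -1 else 1) M)) (mprod gmul gone (map f (insort x M)))"
  using assms
proof (induction M)
  case Nil
  then show ?case using gmul_one_right by fastforce
next
  case (Cons y M)
  have fx: "f x \<in> grass t" "hom (f x) (x \<in> S)" and fy: "f y \<in> grass t" "hom (f y) (y \<in> S)"
    using Cons.prems by auto
  show ?case
  proof (cases "x \<le> y")
    case True
    have "prod_list (map (\<lambda>z. if x \<in> S \<and> z \<in> S \<and> z < x then -1 else (1::'f)) (y # M)) = 1"
      by (rule prod_list_ones) (use Cons.prems True in auto)
    then show ?thesis using True mprod_Cons[OF fx(1), of "map f (y # M)"] by simp
  next
    case False
    let ?h = "\<lambda>z. if x \<in> S \<and> z \<in> S \<and> z < x then -1 else (1::'f)"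
    define e where "e = (if x \<in> S \<and> y \<in> S then -1 else (1::'f))"
    have IH: "gmul (f x) (mprod gmul gone (map f M)) = gsmul (prod_list (map ?h M)) (mprod gmul gone (map f (insort x M)))"
      using Cons.IH Cons.prems by auto
    have "gmul (f x) (mprod gmul gone (map f (y # M))) = gmul (f x) (gmul (f y) (mprod gmul gone (map f M)))"
      using mprod_Cons[OF fy(1)] by simp
    also have "\<dots> = gmul (gmul (f x) (f y)) (mprod gmul gone (map f M))" by (simp add: gmul_assoc)
    also have "\<dots> = gmul (gsmul e (gmul (f y) (f x))) (mprod gmul gone (map f M))"
      using gmul_hom_comm[OF fx(2) fy(2)] by (simp add: e_def)
    also have "\<dots> = gsmul e (gmul (f y) (gmul (f x) (mprod gmul gone (map f M))))"
      by (simp add: gmul_gsmul_left gmul_assoc)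
    also have "\<dots> = gsmul (e * prod_list (map ?h M)) (gmul (f y) (mprod gmul gone (map f (insort x M))))"
      by (simp add: IH gmul_gsmul_right)
    also have "\<dots> = gsmul (e * prod_list (map ?h M)) (mprod gmul gone (map f (y # insort x M)))"
      using mprod_Cons[OF fy(1)] by simp
    finally show ?thesis using False by (simp add: e_def)
  qed
qed

lemma mprod_reorder:
  fixes f :: "nat \<Rightarrow> 'f::field grass"
  assumes "distinct L" "\<And>i. i \<in> set L \<Longrightarrow> f i \<in> grass t \<and> hom (f i) (i \<in> S)"
  shows "mprod gmul gone (map f L) = gsmul (sgnL S L) (mprod gmul gone (map f (sort L)))"
  using assms
proof (induction L)
  case Nil then show ?case by simp
next
  case (Cons x L)
  let ?h = "\<lambda>z. if x \<in> S \<and> z \<in> S \<and> z < x then -1 else (1::'f)"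
  have fx: "f x \<in> grass t" using Cons.prems by auto
  have IH: "mprod gmul gone (map f L) = gsmul (sgnL S L) (mprod gmul gone (map f (sort L)))"
    using Cons by auto
  have ins: "gmul (f x) (mprod gmul gone (map f (sort L))) =
      gsmul (prod_list (map ?h (sort L))) (mprod gmul gone (map f (insort x (sort L))))"
    by (rule insort_prod) (use Cons.prems in auto)
  have "mprod gmul gone (map f (x # L)) = gmul (f x) (mprod gmul gone (map f L))"
    using mprod_Cons[OF fx] by simp
  also have "\<dots> = gsmul (sgnL S L * prod_list (map ?h L)) (mprod gmul gone (map f (insort x (sort L))))"
    by (simp add: IH gmul_gsmul_right ins prod_list_sort)
  finally show ?case by (simp add: mult.commute)
qed

definition flipS :: "(nat \<Rightarrow> nat) \<Rightarrow> nat set \<Rightarrow> nat \<Rightarrow> nat \<Rightarrow> 'f::field" where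
  "flipS s S x y = (if x \<in> S \<and> y \<in> S \<and> ((x < y) \<noteq> (s x < s y)) then -1 else 1)"

fun epsL :: "(nat \<Rightarrow> nat) \<Rightarrow> nat set \<Rightarrow> nat list \<Rightarrow> 'f::field" where
  "epsL s S [] = 1"
| "epsL s S (x # L) = prod_list (map (flipS s S x) L) * epsL s S L"

definition PP :: "(nat \<Rightarrow> nat \<Rightarrow> 'f::field) \<Rightarrow> nat set \<Rightarrow> 'f" where
  "PP g A = (\<Prod>x\<in>A. \<Prod>y\<in>{y\<in>A. x < y}. g x y)"

definition Esg :: "(nat \<Rightarrow> nat) \<Rightarrow> nat set \<Rightarrow> 'f::field" where
  "Esg s S = PP (flipS s S) S"

lemma prod_list_mult: "prod_list (map (\<lambda>y. g y * h y) L) = prod_list (map g L) * (prod_list (map h L) :: 'a::comm_monoid_mult)"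
  by (induction L) (simp_all add: algebra_simps)

lemma prod_list_distinct: "distinct L \<Longrightarrow> prod_list (map h L) = (prod h (set L) :: 'a::comm_monoid_mult)"
  by (induction L) simp_all

lemma sgnL_nz: "(sgnL S L :: 'f::field) \<noteq> 0"
  by (induction L) (auto simp: prod_list_zero_iff)

lemma flipS_sym: "inj_on s S \<Longrightarrow> flipS s S x y = flipS s S y x"
  unfolding flipS_def by (cases "x = y") (auto simp: inj_on_def linorder_neq_iff)

lemma sgnL_map:
  assumes "distinct L" "inj_on s (set L \<union> S)"
  shows "(sgnL (s ` S) (map s L) :: 'f::field) = sgnL S L * epsL s S L"
  using assms
proof (induction L)
  case Nil then show ?case by simp
next
  case (Cons x L)
  have IH: "(sgnL (s ` S) (map s L) :: 'f) = sgnL S L * epsL s S L"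
    using Cons by (auto intro: inj_on_subset)
  have "map (\<lambda>y. if s x \<in> s ` S \<and> y \<in> s ` S \<and> y < s x then -1 else (1::'f)) (map s L)
      = map (\<lambda>y. (if x \<in> S \<and> y \<in> S \<and> y < x then -1 else 1) * flipS s S x y) L"
    unfolding map_map o_def
  proof (rule map_cong[OF refl])
    fix y assume y: "y \<in> set L"
    have xy: "x \<noteq> y" "s x \<noteq> s y" using Cons.prems y by (auto simp: inj_on_def)
    have "s x \<in> s ` S \<longleftrightarrow> x \<in> S" "s y \<in> s ` S \<longleftrightarrow> y \<in> S"
      using Cons.prems y by (auto simp: inj_on_def)
    then show "(if s x \<in> s ` S \<and> s y \<in> s ` S \<and> s y < s x then -1 else (1::'f)) =
        (if x \<in> S \<and> y \<in> S \<and> y < x then -1 else 1) * flipS s S x y"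
      using xy by (auto simp: flipS_def linorder_neq_iff)
  qed
  then show ?case
    by (simp add: IH prod_list_mult algebra_simps del: map_map)
qed

lemma PP_insert:
  assumes "finite A" "x \<notin> A" "\<And>u v. g u v = g v u"
  shows "PP g (insert x A) = (\<Prod>y\<in>A. g x y) * (PP g A :: 'f::field)"
proof -
  have s1: "{y \<in> insert x A. x < y} = {y \<in> A. x < y}" by auto
  have s2: "(\<Prod>y\<in>{y \<in> insert x A. z < y}. g z y) = (if z < x then g z x else 1) * (\<Prod>y\<in>{y \<in> A. z < y}. g z y)"
    if "z \<in> A" for z
  proof (cases "z < x")
    case True
    have "{y \<in> insert x A. z < y} = insert x {y \<in> A. z < y}" using True by auto
    then show ?thesis using True assms by simp
  next
    case False
    have "{y \<in> insert x A. z < y} = {y \<in> A. z < y}" using False by auto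
    then show ?thesis using False by simp
  qed
  have sw: "(\<Prod>z\<in>A. (if z < x then g z x else 1)) = (\<Prod>z\<in>A. (if z < x then g x z else 1))"
    by (rule prod.cong[OF refl]) (metis assms(3))
  have c: "(\<Prod>z\<in>A. \<Prod>y\<in>{y\<in>insert x A. z < y}. g z y) = (\<Prod>z\<in>A. (if z < x then g z x else 1) * (\<Prod>y\<in>{y \<in> A. z < y}. g z y))"
    by (rule prod.cong[OF refl]) (rule s2)
  have "PP g (insert x A) = (\<Prod>y\<in>{y\<in>insert x A. x < y}. g x y) * (\<Prod>z\<in>A. \<Prod>y\<in>{y\<in>insert x A. z < y}. g z y)"
    unfolding PP_def by (subst prod.insert[OF assms(1,2)]) (rule refl)
  also have "\<dots> = (\<Prod>y\<in>{y \<in> A. x < y}. g x y) * (\<Prod>z\<in>A. (if z < x then g z x else 1) * (\<Prod>y\<in>{y \<in> A. z < y}. g z y))"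
    unfolding s1 c ..
  also have "\<dots> = (\<Prod>y\<in>{y \<in> A. x < y}. g x y) * (\<Prod>z\<in>A. (if z < x then g x z else 1)) * PP g A"
    unfolding PP_def prod.distrib sw by (simp only: mult.assoc)
  also have "(\<Prod>z\<in>A. (if z < x then g x z else 1)) = (\<Prod>y\<in>{y \<in> A. y < x}. g x y)"
    using assms(1) by (simp add: prod.If_cases Int_def conj_commute)
  also have "(\<Prod>y\<in>{y \<in> A. x < y}. g x y) * (\<Prod>y\<in>{y \<in> A. y < x}. g x y) = (\<Prod>y\<in>A. g x y)"
  proof -
    have "A = {y \<in> A. x < y} \<union> {y \<in> A. y < x}" using assms(2) by (auto, metis linorder_neqE_nat)
    then show ?thesis using assms(1)
      by (metis (no_types, lifting) prod.union_disjoint disjoint_iff finite_Un mem_Collect_eq not_less_iff_gr_or_eq)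
  qed
  finally show ?thesis .
qed

lemma epsL_PP:
  assumes "distinct L" "inj_on s S"
  shows "(epsL s S L :: 'f::field) = PP (flipS s S) (set L)"
  using assms
proof (induction L)
  case Nil then show ?case by (simp add: PP_def)
next
  case (Cons x L)
  have d: "distinct L" "x \<notin> set L" using Cons.prems by auto
  have "(epsL s S (x # L) :: 'f) = prod_list (map (flipS s S x) L) * epsL s S L" by simp
  also have "\<dots> = (\<Prod>y\<in>set L. flipS s S x y) * PP (flipS s S) (set L)"
    using Cons d by (simp add: prod_list_distinct)
  also have "\<dots> = PP (flipS s S) (insert x (set L))"
    by (rule PP_insert[symmetric]) (use d flipS_sym[OF assms(2)] in auto)
  finally show ?case by simp
qed

lemma PP_restrict:
  assumes "finite A" "S \<subseteq> A"
  shows "PP (flipS s S) A = (PP (flipS s S) S :: 'f::field)"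
proof -
  have "PP (flipS s S) A = (\<Prod>x\<in>A. \<Prod>y\<in>{y\<in>S. x < y}. flipS s S x y)"
    unfolding PP_def
    apply (rule prod.cong[OF refl])
    apply (rule prod.mono_neutral_right)
    using assms by (auto simp: flipS_def)
  also have "\<dots> = (\<Prod>x\<in>S. \<Prod>y\<in>{y\<in>S. x < y}. flipS s S x y)"
    by (rule prod.mono_neutral_right) (use assms in \<open>auto simp: flipS_def intro!: prod.neutral\<close>)
  finally show ?thesis by (simp add: PP_def)
qed

lemma PP_cong: "(\<And>x y. x \<in> A \<Longrightarrow> y \<in> A \<Longrightarrow> g x y = h x y) \<Longrightarrow> PP g A = PP h A"
  unfolding PP_def by (auto intro!: prod.cong)

lemma Esg_cong: "(\<And>x. x \<in> S \<Longrightarrow> s x = r x) \<Longrightarrow> Esg s S = Esg r S"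
  unfolding Esg_def by (rule PP_cong) (auto simp: flipS_def)

lemma sgnL_map_Esg:
  assumes "distinct L" "inj_on s (set L)" "S \<subseteq> set L"
  shows "(sgnL (s ` S) (map s L) :: 'f::field) = sgnL S L * Esg s S"
proof -
  have "inj_on s (set L \<union> S)" using assms by (simp add: Un_absorb2)
  from sgnL_map[OF assms(1) this] have "(sgnL (s ` S) (map s L) :: 'f) = sgnL S L * epsL s S L" .
  also have "epsL s S L = (PP (flipS s S) (set L) :: 'f)"
    by (rule epsL_PP) (use assms in \<open>auto intro: inj_on_subset\<close>)
  also have "\<dots> = Esg s S" unfolding Esg_def by (rule PP_restrict) (use assms in auto)
  finally show ?thesis .
qed

lemma Esg_mult:
  assumes "finite S" "bij_betw t S S" "inj_on r S"
  shows "(Esg (r \<circ> t) S :: 'f::field) = Esg r S * Esg t S"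
proof -
  define L where "L = sorted_list_of_set S"
  have L: "distinct L" "set L = S" using assms(1) by (auto simp: L_def)
  have tS: "t ` S = S" "inj_on t S" using assms(2) by (auto simp: bij_betw_def)
  have rt: "inj_on (r \<circ> t) S" using tS assms(3) by (simp add: comp_inj_on)
  have "(sgnL ((r \<circ> t) ` S) (map (r \<circ> t) L) :: 'f) = sgnL S L * Esg (r \<circ> t) S"
    by (rule sgnL_map_Esg) (use L rt in auto)
  moreover have "(sgnL ((r \<circ> t) ` S) (map (r \<circ> t) L) :: 'f) = sgnL (r ` (t ` S)) (map r (map t L))"
    by (simp add: image_comp)
  moreover have "(sgnL (r ` (t ` S)) (map r (map t L)) :: 'f) = sgnL (t ` S) (map t L) * Esg r (t ` S)"
    by (rule sgnL_map_Esg) (use L tS assms(3) in \<open>auto simp: distinct_map\<close>)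
  moreover have "(sgnL (t ` S) (map t L) :: 'f) = sgnL S L * Esg t S"
    by (rule sgnL_map_Esg) (use L tS in auto)
  ultimately have "sgnL S L * Esg (r \<circ> t) S = sgnL S L * (Esg r S * (Esg t S :: 'f))"
    using tS by (simp add: algebra_simps)
  then show ?thesis using sgnL_nz[of S L] by (metis mult_left_cancel)
qed

lemma Esg_id: "Esg id S = 1" and Esg_ident: "Esg (\<lambda>x. x) S = 1"
  by (simp_all add: Esg_def PP_def flipS_def)

lemma Esg_transpose:
  assumes "finite S" "a \<in> S" "b \<in> S" "a < b"
  shows "(Esg (Transposition.transpose a b) S :: 'f::field) = -1"
proof -
  let ?t = "Transposition.transpose a b"
  define P where "P = {(x, y). x \<in> S \<and> y \<in> S \<and> x < y}"
  define M where "M = {y \<in> S. a < y \<and> y < b}"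
  define F where "F = insert (a, b) ((\<lambda>y. (a, y)) ` M \<union> (\<lambda>x. (x, b)) ` M)"
  have PS: "P = Sigma S (\<lambda>x. {y \<in> S. x < y})" by (auto simp: P_def)
  have finP: "finite P" unfolding PS using assms(1) by auto
  have FP: "F \<subseteq> P" using assms by (auto simp: F_def P_def M_def)
  have fl: "flipS ?t S x y = (if (x, y) \<in> F then -1 else (1::'f))" if "(x, y) \<in> P" for x y
    using that assms unfolding flipS_def F_def P_def M_def
    by (auto simp: Transposition.transpose_def)
  have "(Esg ?t S :: 'f) = (\<Prod>p\<in>P. flipS ?t S (fst p) (snd p))"
    unfolding Esg_def PP_def PS by (subst prod.Sigma) (auto simp: split_def assms(1))
  also have "\<dots> = (\<Prod>p\<in>P. if p \<in> F then -1 else (1::'f))"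
    by (rule prod.cong) (auto simp: fl)
  also have "\<dots> = (-1) ^ card F"
    using finP FP by (simp add: prod.If_cases Int_absorb1[OF FP] Int_absorb2[OF FP])
  also have "card F = 1 + card M + card M"
  proof -
    have fM: "finite M" using assms(1) by (auto simp: M_def)
    have "card ((\<lambda>y. (a, y)) ` M \<union> (\<lambda>x. (x, b)) ` M) = card ((\<lambda>y. (a, y)) ` M) + card ((\<lambda>x. (x, b)) ` M)"
      by (rule card_Un_disjoint) (use fM in \<open>auto simp: M_def\<close>)
    moreover have "card ((\<lambda>y. (a, y)) ` M) = card M" "card ((\<lambda>x. (x, b)) ` M) = card M"
      by (auto simp: card_image inj_on_def)
    moreover have "(a, b) \<notin> (\<lambda>y. (a, y)) ` M \<union> (\<lambda>x. (x, b)) ` M" by (auto simp: M_def)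
    ultimately show ?thesis using fM by (simp add: F_def)
  qed
  finally show ?thesis by simp
qed

lemma Esg_sign:
  assumes "p permutes S" "finite S"
  shows "(Esg p S :: 'f::field) = of_int (sign p)"
  using assms
proof (induction rule: permutes_induct)
  case id then show ?case by (simp add: Esg_id Esg_ident)
next
  case (swap a b p)
  have tr: "Transposition.transpose a b = Transposition.transpose (min a b) (max a b)"
    by (metis max.commute max_def min_def transpose_commute)
  have "(Esg (Transposition.transpose a b) S :: 'f) = -1"
    unfolding tr by (rule Esg_transpose) (use swap assms in \<open>auto simp: min_def max_def\<close>)
  moreover have "(Esg (Transposition.transpose a b \<circ> p) S :: 'f) = Esg (Transposition.transpose a b) S * Esg p S"
    by (rule Esg_mult) (use swap assms in \<open>auto simp: permutes_imp_bij\<close>)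
  moreover have "sign (Transposition.transpose a b \<circ> p) = - sign p"
    using swap assms by (simp add: sign_compose permutes_imp_permutation sign_swap_id permutation_swap_id)
  ultimately show ?case using swap.IH by (simp only: mult_minus1 of_int_minus)
qed

lemma Esg_sign_on:
  assumes "s permutes A" "finite A" "S \<subseteq> A" "s ` S = S"
  shows "(Esg s S :: 'f::field) = of_int (sign_on S s)"
proof -
  have fS: "finite S" using assms finite_subset by auto
  have bij: "bij_betw s S S" using assms permutes_inj_on[OF assms(1)]
    by (simp add: bij_betw_def inj_on_subset)
  have "Esg s S = (Esg (restrict_id s S) S :: 'f)"
    by (rule Esg_cong) (simp add: restrict_id_def)
  also have "\<dots> = of_int (sign (restrict_id s S))"
    by (rule Esg_sign[OF permutes_restrict_id[OF bij] fS])
  finally show ?thesis by (simp add: sign_on_def)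
qed

definition perms :: "nat \<Rightarrow> (nat \<Rightarrow> nat) set" where
  "perms n = {p. p permutes {..<n}}"

definition sS :: "nat \<Rightarrow> nat set \<Rightarrow> (nat \<Rightarrow> nat) \<Rightarrow> 'f::field" where
  "sS n S p = sgnL S (map p [0..<n])"

definition sig :: "nat \<Rightarrow> nat set \<Rightarrow> 'f::field mpoly \<Rightarrow> 'f" where
  "sig n S q = (\<Sum>p\<in>perms n. sS n S p * q (S, p))"

definition EE :: "nat \<Rightarrow> nat set \<Rightarrow> (nat \<Rightarrow> 'f::field grass) \<Rightarrow> (nat \<Rightarrow> 'f grass) \<Rightarrow> 'f grass" where
  "EE n S b c = mprod gmul gone (map (\<lambda>i. if i \<in> S then c i else b i) [0..<n])"

lemma finite_perms: "finite (perms n)"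
  unfolding perms_def by (rule finite_permutations) simp

lemma mmonos_eq: "mmonos n = Pow {..<n} \<times> perms n"
  by (auto simp: mmonos_def perms_def)

lemma finite_mmonos: "finite (mmonos n)"
  by (simp add: mmonos_eq finite_perms)

lemma sort_perm: "p permutes {..<n} \<Longrightarrow> sort (map p [0..<n]) = [0..<n]"
proof (rule sorted_distinct_set_unique)
  assume p: "p permutes {..<n}"
  show "distinct (sort (map p [0..<n]))"
    using permutes_inj_on[OF p] by (simp add: distinct_map atLeast0LessThan)
  show "set (sort (map p [0..<n])) = set [0..<n]"
    using permutes_image[OF p] by (simp add: atLeast0LessThan)
qed auto

lemma grass0_sub: "x \<in> grass0 t \<Longrightarrow> x \<in> grass t \<and> hom x False"
  by (auto simp: grass0_def hom_def)

lemma grass1_sub: "x \<in> grass1 t \<Longrightarrow> x \<in> grass t \<and> hom x True"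
  by (auto simp: grass1_def hom_def)

lemma fS_props:
  assumes "b i \<in> grass0 t" "c i \<in> grass1 t"
  shows "(if i \<in> S then c i else b i) \<in> grass t \<and> hom (if i \<in> S then c i else b i) (i \<in> S)"
  using grass0_sub[OF assms(1)] grass1_sub[OF assms(2)] by auto

lemma evalP_expand:
  assumes "\<And>i. b i \<in> grass0 t" "\<And>i. c i \<in> grass1 t"
  shows "evalP gmul gone gsmul n q b c = (\<Sum>S\<in>Pow {..<n}. gsmul (sig n S q) (EE n S b c))"
proof -
  have fp: "(if i \<in> S then c i else b i) \<in> grass t \<and> hom (if i \<in> S then c i else b i) (i \<in> S)" for i S
    using fS_props[where b=b and c=c and t=t and i=i and S=S] assms by blast
  have trm: "mprod gmul gone (map (\<lambda>j. if p j \<in> S then c (p j) else b (p j)) [0..<n])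
      = gsmul (sS n S p) (EE n S b c)" if "p permutes {..<n}" for S p
  proof -
    have e1: "map (\<lambda>j. if p j \<in> S then c (p j) else b (p j)) [0..<n] = map (\<lambda>i. if i \<in> S then c i else b i) (map p [0..<n])"
      by simp
    have e2: "mprod gmul gone (map (\<lambda>i. if i \<in> S then c i else b i) (map p [0..<n])) =
        gsmul (sgnL S (map p [0..<n])) (mprod gmul gone (map (\<lambda>i. if i \<in> S then c i else b i) (sort (map p [0..<n]))))"
      by (rule mprod_reorder[where t=t]) (use permutes_inj_on[OF that] fp in \<open>auto simp: distinct_map atLeast0LessThan\<close>)
    show ?thesis unfolding e1 e2 sort_perm[OF that] sS_def EE_def ..
  qed
  have "evalP gmul gone gsmul n q b c = (\<Sum>(S, p)\<in>Pow {..<n} \<times> perms n. gsmul (q (S, p)) (gsmul (sS n S p) (EE n S b c)))"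
    unfolding evalP_def mmonos_eq by (rule sum.cong) (auto simp: trm perms_def)
  also have "\<dots> = (\<Sum>S\<in>Pow {..<n}. \<Sum>p\<in>perms n. gsmul (sS n S p * q (S, p)) (EE n S b c))"
    by (subst sum.cartesian_product[symmetric]) (simp add: mult.commute)
  also have "\<dots> = (\<Sum>S\<in>Pow {..<n}. gsmul (sig n S q) (EE n S b c))"
    by (simp add: sig_def gsmul_sum_left)
  finally show ?thesis .
qed

lemma EE_props:
  assumes "\<And>i. b i \<in> grass0 t" "\<And>i. c i \<in> grass1 t" "S \<subseteq> {..<n}"
  shows "EE n S b c \<in> grass t \<and> hom (EE n S b c) (odd (card S)) \<and> lowdeg (card S) (EE n S b c)"
proof -
  have "length (filter (\<lambda>i. i \<in> S) [0..<n]) = card S"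
  proof -
    have "{x. x \<in> S} \<inter> set [0..<n] = S" using assms(3) by auto
    then show ?thesis by (simp add: distinct_length_filter)
  qed
  moreover have "mprod gmul gone (map (\<lambda>i. if i \<in> S then c i else b i) [0..<n]) \<in> grass t \<and>
      hom (mprod gmul gone (map (\<lambda>i. if i \<in> S then c i else b i) [0..<n])) (odd (length (filter (\<lambda>i. i \<in> S) [0..<n]))) \<and>
      lowdeg (length (filter (\<lambda>i. i \<in> S) [0..<n])) (mprod gmul gone (map (\<lambda>i. if i \<in> S then c i else b i) [0..<n]))"
    by (rule mprod_props) (use fS_props[where b=b and c=c and t=t and S=S] assms in blast)
  ultimately show ?thesis unfolding EE_def by simp
qed

definition K :: "nat \<Rightarrow> nat set set \<Rightarrow> 'f::field mpoly set" where
  "K n Z = {q \<in> Pgr n. \<forall>S\<in>Z. sig n S q = 0}"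

lemma gone_gmono: "gone = gmono {}"
  by (simp add: gone_def gmono_def fun_eq_iff)

lemma gmul_gmono:
  assumes "finite A" "finite B" "A \<inter> B = {}"
  shows "gmul (gmono A) (gmono B) = gsmul (gsign A B) (gmono (A \<union> B) :: 'f::field grass)"
proof
  fix U :: "nat set"
  show "gmul (gmono A) (gmono B) U = gsmul (gsign A B) (gmono (A \<union> B) :: 'f grass) U"
  proof (cases "finite U")
    case False
    then have "U \<noteq> A \<union> B" using assms by auto
    then show ?thesis using False by (simp add: gmul_infinite gsmul_def gmono_def)
  next
    case True
    have "gmul (gmono A) (gmono B) U = (\<Sum>S\<in>Pow U. if S = A \<and> U = A \<union> B then gsign A B else (0::'f))"
      unfolding gmul_def
    proof (rule sum.cong[OF refl])
      fix S assume "S \<in> Pow U"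
      then show "gsign S (U - S) * gmono A S * gmono B (U - S) = (if S = A \<and> U = A \<union> B then gsign A B else (0::'f))"
        using assms(3) by (auto simp: gmono_def)
    qed
    also have "\<dots> = (if U = A \<union> B then gsign A B else (0::'f))"
      using True by (auto simp: sum.delta')
    finally have eq: "gmul (gmono A) (gmono B) U = (if U = A \<union> B then gsign A B else (0::'f))" .
    show ?thesis by (simp only: eq) (simp add: gsmul_def gmono_def)
  qed
qed

lemma gsign_less: "(\<And>u. u \<in> B \<Longrightarrow> j < u) \<Longrightarrow> (gsign {j} B :: 'f::field) = 1"
proof -
  assume "\<And>u. u \<in> B \<Longrightarrow> j < u"
  then have "{(s, u). s \<in> {j} \<and> u \<in> B \<and> u < s} = {}" by fastforce
  then show ?thesis by (simp only: gsign_def card.empty power_0)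
qed

lemma mprod_zero: "0 \<in> set xs \<Longrightarrow> mprod gmul gone xs = (0 :: 'f::field grass)"
  by (induction xs rule: induct_list012) auto

lemma mprod_Cons_mono: "mprod gmul gone (gmono A # xs) = gmul (gmono A) (mprod gmul gone xs :: 'f::field grass)"
  if "finite A"
proof (cases xs)
  case Nil
  have "gmul (gmono A) (gmono {}) = (gmono A :: 'f grass)" using gmul_gmono[OF that, of "{}"] by simp
  then show ?thesis using Nil by (simp add: gone_gmono)
qed simp

lemma mprod_monos:
  assumes "sorted L" "distinct L" "\<And>i j. i \<in> S0 \<Longrightarrow> j \<in> S0 \<Longrightarrow> i < j \<Longrightarrow> g i < g j"
  shows "mprod gmul gone (map (\<lambda>i. if i \<in> S0 then gmono {g i} else gone) L) = (gmono (g ` (set L \<inter> S0)) :: 'f::field grass)"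
  using assms
proof (induction L)
  case Nil then show ?case by (simp add: gone_gmono)
next
  case (Cons x L)
  have IH: "mprod gmul gone (map (\<lambda>i. if i \<in> S0 then gmono {g i} else gone) L) = (gmono (g ` (set L \<inter> S0)) :: 'f grass)"
    using Cons by auto
  have gt: "x < y" if "y \<in> set L" for y
  proof -
    have "x \<le> y" "x \<noteq> y" using Cons.prems that by auto
    then show ?thesis by simp
  qed
  show ?case
  proof (cases "x \<in> S0")
    case True
    have A: "\<And>u. u \<in> g ` (set L \<inter> S0) \<Longrightarrow> g x < u" using gt True assms(3) by auto
    have "mprod gmul gone (map (\<lambda>i. if i \<in> S0 then gmono {g i} else gone) (x # L))
        = gmul (gmono {g x}) (gmono (g ` (set L \<inter> S0)) :: 'f grass)"
      using True IH mprod_Cons_mono[of "{g x}", where 'f='f] by simp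
    also have "\<dots> = gsmul (gsign {g x} (g ` (set L \<inter> S0))) (gmono ({g x} \<union> g ` (set L \<inter> S0)))"
      by (rule gmul_gmono) (use A in auto)
    also have "\<dots> = gmono (g ` (set (x # L) \<inter> S0))"
    proof -
      have "g ` (set (x # L) \<inter> S0) = {g x} \<union> g ` (set L \<inter> S0)" using True by auto
      moreover have gs: "gsign {g x} (g ` (set L \<inter> S0)) = (1::'f)" by (rule gsign_less) (rule A)
      ultimately show ?thesis by simp
    qed
    finally show ?thesis .
  next
    case False
    have "mprod gmul gone (map (\<lambda>i. if i \<in> S0 then gmono {g i} else gone) (x # L))
        = gmul (gmono {}) (gmono (g ` (set L \<inter> S0)) :: 'f grass)"
      using False IH mprod_Cons_mono[of "{}", where 'f='f] by (simp add: gone_gmono)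
    also have "\<dots> = gmono (g ` (set L \<inter> S0))"
      using gmul_gmono[of "{}" "g ` (set L \<inter> S0)"] by simp
    finally show ?thesis using False by simp
  qed
qed

definition rk :: "nat set \<Rightarrow> nat \<Rightarrow> nat" where
  "rk S0 i = card {s \<in> S0. s \<le> i}"

lemma rk_mono: "finite S0 \<Longrightarrow> j \<in> S0 \<Longrightarrow> i < j \<Longrightarrow> rk S0 i < rk S0 j"
proof -
  assume a: "finite S0" "j \<in> S0" "i < j"
  have "{s \<in> S0. s \<le> i} \<subset> {s \<in> S0. s \<le> j}"
  proof
    show "{s \<in> S0. s \<le> i} \<subseteq> {s \<in> S0. s \<le> j}" using a by auto
    show "{s \<in> S0. s \<le> i} \<noteq> {s \<in> S0. s \<le> j}" using a by (metis (mono_tags, lifting) mem_Collect_eq not_le order_refl)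
  qed
  then show ?thesis unfolding rk_def by (rule psubset_card_mono[rotated]) (use a in auto)
qed

lemma rk_range: "finite S0 \<Longrightarrow> i \<in> S0 \<Longrightarrow> 1 \<le> rk S0 i \<and> rk S0 i \<le> card S0"
proof -
  assume a: "finite S0" "i \<in> S0"
  have "{s \<in> S0. s \<le> i} \<noteq> {}" using a by auto
  then have "0 < rk S0 i" unfolding rk_def using a by (simp add: card_gt_0_iff)
  moreover have "rk S0 i \<le> card S0" unfolding rk_def using a by (intro card_mono) auto
  ultimately show ?thesis by simp
qed

lemma rk_inj: "finite S0 \<Longrightarrow> inj_on (rk S0) S0"
  unfolding inj_on_def
proof (intro ballI impI, rule ccontr)
  fix x y assume a: "finite S0" "x \<in> S0" "y \<in> S0" "rk S0 x = rk S0 y" "x \<noteq> y"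
  then consider "x < y" | "y < x" by linarith
  then show False
  proof cases
    case 1 then show False using rk_mono[of S0 y x] a by simp
  next
    case 2 then show False using rk_mono[of S0 x y] a by simp
  qed
qed

lemma rk_card: "finite S0 \<Longrightarrow> card (rk S0 ` S0) = card S0"
  by (simp add: card_image rk_inj)

lemma rk_sub: "finite S0 \<Longrightarrow> rk S0 ` S0 \<subseteq> {1..card S0}"
  using rk_range by fastforce

definition wb :: "nat set \<Rightarrow> nat \<Rightarrow> 'f::field grass" where
  "wb S0 i = (if i \<in> S0 then 0 else gone)"

definition wc :: "nat set \<Rightarrow> nat \<Rightarrow> 'f::field grass" where
  "wc S0 i = (if i \<in> S0 then gmono {rk S0 i} else 0)"

lemma wb_in: "wb S0 i \<in> grass0 t"
  by (auto simp: wb_def grass0_def grass_def gone_def)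

lemma wc_in: "finite S0 \<Longrightarrow> card S0 \<le> t \<Longrightarrow> wc S0 i \<in> grass1 t"
  using rk_range[of S0 i] by (auto simp: wc_def grass1_def grass_def gmono_def)

lemma EE_witness_same:
  assumes "S0 \<subseteq> {..<n}"
  shows "EE n S0 (wb S0) (wc S0) = (gmono (rk S0 ` S0) :: 'f::field grass)"
proof -
  have fin: "finite S0" using assms finite_subset by auto
  have m: "map (\<lambda>i. if i \<in> S0 then wc S0 i else wb S0 i) [0..<n] = map (\<lambda>i. if i \<in> S0 then gmono {rk S0 i} else (gone :: 'f grass)) [0..<n]"
    by (simp add: wc_def wb_def)
  have st: "set [0..<n] \<inter> S0 = S0" using assms by auto
  have "mprod gmul gone (map (\<lambda>i. if i \<in> S0 then gmono {rk S0 i} else (gone :: 'f grass)) [0..<n]) = gmono (rk S0 ` (set [0..<n] \<inter> S0))"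
    by (rule mprod_monos) (auto intro: rk_mono[OF fin])
  then show ?thesis unfolding EE_def m st .
qed

lemma EE_witness_other:
  assumes "S \<subseteq> {..<n}" "S0 \<subseteq> {..<n}" "S \<noteq> S0"
  shows "EE n S (wb S0) (wc S0) = (0 :: 'f::field grass)"
proof -
  have "\<exists>j. j < n \<and> ((j \<in> S \<and> j \<notin> S0) \<or> (j \<in> S0 \<and> j \<notin> S))"
  proof (rule ccontr)
    assume "\<not> ?thesis"
    then have "S = S0" using assms(1,2) by auto
    then show False using assms(3) by simp
  qed
  then obtain j where j: "j < n" "(j \<in> S \<and> j \<notin> S0) \<or> (j \<in> S0 \<and> j \<notin> S)" by blast
  then have z: "(if j \<in> S then wc S0 j else wb S0 j) = (0 :: 'f grass)" by (auto simp: wc_def wb_def)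
  have "(if j \<in> S then wc S0 j else (wb S0 j :: 'f grass)) \<in> set (map (\<lambda>i. if i \<in> S then wc S0 i else (wb S0 i :: 'f grass)) [0..<n])"
    using j(1) by simp
  then have "0 \<in> set (map (\<lambda>i. if i \<in> S then wc S0 i else (wb S0 i :: 'f grass)) [0..<n])"
    unfolding z .
  then show ?thesis unfolding EE_def by (rule mprod_zero)
qed

lemma eval_witness:
  assumes "S0 \<subseteq> {..<n}" "card S0 \<le> t"
  shows "evalP gmul gone gsmul n q (wb S0) (wc S0) = gsmul (sig n S0 q) (gmono (rk S0 ` S0) :: 'f::field grass)"
proof -
  have fin: "finite S0" using assms finite_subset by auto
  have "evalP gmul gone gsmul n q (wb S0) (wc S0) = (\<Sum>S\<in>Pow {..<n}. gsmul (sig n S q) (EE n S (wb S0) (wc S0)))"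
    by (rule evalP_expand[where t=t]) (use wb_in wc_in[OF fin assms(2)] in auto)
  also have "\<dots> = (\<Sum>S\<in>Pow {..<n}. if S = S0 then gsmul (sig n S0 q) (gmono (rk S0 ` S0)) else 0)"
  proof (rule sum.cong[OF refl])
    fix S assume S: "S \<in> Pow {..<n}"
    show "gsmul (sig n S q) (EE n S (wb S0) (wc S0)) = (if S = S0 then gsmul (sig n S0 q) (gmono (rk S0 ` S0)) else (0::'f grass))"
    proof (cases "S = S0")
      case True then show ?thesis using EE_witness_same[OF assms(1), where 'f='f] by simp
    next
      case False then show ?thesis using EE_witness_other[of S n S0, where 'f='f] S assms(1) by simp
    qed
  qed
  also have "\<dots> = gsmul (sig n S0 q) (gmono (rk S0 ` S0))"
    using assms by (simp add: sum.delta')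
  finally show ?thesis .
qed

lemma mono_at: "gmono A A = 1"
  by (simp add: gmono_def)

lemma IdP_char:
  "IdP gmul gone gsmul (grass0 t) (grass1 t) n = (K n {S. S \<subseteq> {..<n} \<and> card S \<le> t} :: 'f::field mpoly set)"
proof (intro set_eqI iffI)
  fix q :: "'f mpoly"
  assume q: "q \<in> IdP gmul gone gsmul (grass0 t) (grass1 t) n"
  { fix S0 assume S0: "S0 \<subseteq> {..<n}" "card S0 \<le> t"
    have fin: "finite S0" using S0 finite_subset by auto
    have "evalP gmul gone gsmul n q (wb S0) (wc S0) = 0"
      using q wb_in wc_in[OF fin S0(2)] unfolding IdP_def by blast
    then have "gsmul (sig n S0 q) (gmono (rk S0 ` S0)) (rk S0 ` S0) = 0"
      using eval_witness[OF S0, where q=q] by simp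
    then have "sig n S0 q = 0" by (simp add: gsmul_def gmono_def) }
  then show "q \<in> K n {S. S \<subseteq> {..<n} \<and> card S \<le> t}" using q unfolding K_def IdP_def by blast
next
  fix q :: "'f mpoly"
  assume q: "q \<in> K n {S. S \<subseteq> {..<n} \<and> card S \<le> t}"
  { fix b c :: "nat \<Rightarrow> 'f grass" assume bc: "\<forall>i. b i \<in> grass0 t" "\<forall>i. c i \<in> grass1 t"
    have "evalP gmul gone gsmul n q b c = (\<Sum>S\<in>Pow {..<n}. gsmul (sig n S q) (EE n S b c))"
      by (rule evalP_expand) (use bc in auto)
    also have "\<dots> = (\<Sum>S\<in>Pow {..<n}. 0)"
    proof (rule sum.cong[OF refl])
      fix S assume S: "S \<in> Pow {..<n}"
      show "gsmul (sig n S q) (EE n S b c) = 0"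
      proof (cases "card S \<le> t")
        case True then show ?thesis using q S unfolding K_def by auto
      next
        case False
        have h: "EE n S b c \<in> grass t \<and> hom (EE n S b c) (odd (card S)) \<and> lowdeg (card S) (EE n S b c)"
          by (rule EE_props) (use bc S in auto)
        have "EE n S b c = 0"
          by (rule grass_lowdeg_zero[of _ t "card S"]) (use h False in auto)
        then show ?thesis by simp
      qed
    qed
    finally have "evalP gmul gone gsmul n q b c = 0" by simp }
  then show "q \<in> IdP gmul gone gsmul (grass0 t) (grass1 t) n" using q unfolding K_def IdP_def by blast
qed

lemma char0_self_neg: "(x::'f::field_char_0) = - x \<Longrightarrow> x = 0"
proof -
  assume "x = - x"
  then have "x + x = 0" by (metis add.right_inverse)
  then have "2 * x = 0" by (simp only: mult_2)
  then show "x = 0" by simp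
qed

lemma comm_even: "hom x False \<Longrightarrow> gmul x a = gmul a (x :: 'f::field grass)"
proof -
  assume h: "hom x False"
  have "gmul x a = gsmul 1 (gmul a x)"
  proof (rule gmul_swap)
    fix S V assume "x S \<noteq> 0"
    then have "even (card S)" using h by (auto simp: hom_def)
    then show "(-1) ^ (card S * card V) = (1::'f)" by simp
  qed
  then show ?thesis by simp
qed

lemma comm_top:
  assumes "x \<in> grass t" "lowdeg t x" "a \<in> grass t"
  shows "gmul x a = gmul a (x :: 'f::field grass)"
proof -
  have "gmul x a = gsmul 1 (gmul a x)"
  proof (rule gmul_swap)
    fix S V assume SV: "finite S" "finite V" "S \<inter> V = {}" "x S \<noteq> 0" "a V \<noteq> 0"
    have S: "S \<subseteq> {1..t}" "t \<le> card S" using assms SV by (auto simp: grass_def lowdeg_def)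
    have "S = {1..t}"
    proof (rule card_subset_eq)
      have "card S \<le> card {1..t}" using S(1) by (intro card_mono) auto
      then show "card S = card {1..t}" using S(2) by simp
    qed (use S in auto)
    moreover have "V \<subseteq> {1..t}" using assms SV by (auto simp: grass_def)
    ultimately have "V = {}" using SV by auto
    then show "(-1) ^ (card S * card V) = (1::'f)" by simp
  qed
  then show ?thesis by simp
qed

lemma lowdeg_mono: "lowdeg d x \<Longrightarrow> d' \<le> d \<Longrightarrow> lowdeg d' x"
  by (auto simp: lowdeg_def)

lemma CP_char:
  assumes "t = 2*k \<or> t = 2*k+1" "1 \<le> k"
  shows "CP gmul gone gsmul (grass t) (grass0 t) (grass1 t) n
     = (K n {S. S \<subseteq> {..<n} \<and> odd (card S) \<and> card S \<le> 2*k} :: 'f::field_char_0 mpoly set)"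
proof (intro set_eqI iffI)
  fix q :: "'f mpoly"
  assume q: "q \<in> CP gmul gone gsmul (grass t) (grass0 t) (grass1 t) n"
  { fix S0 assume S0: "S0 \<subseteq> {..<n}" "odd (card S0)" "card S0 \<le> 2*k"
    define m where "m = card S0"
    define A where "A = rk S0 ` S0"
    define j where "j = m + 1"
    have fin: "finite S0" using S0 finite_subset by auto
    have mt: "m + 1 \<le> t" using S0 assms 
    proof -
      have "m \<noteq> 2*k" using S0(2) unfolding m_def by auto
      then show ?thesis using S0(3) assms(1) unfolding m_def by linarith
    qed
    have cS0: "card S0 \<le> t" using mt unfolding m_def by simp
    have finA: "finite A" using fin by (simp add: A_def)
    have cardA: "card A = m" using rk_card[OF fin] by (simp add: A_def m_def)
    have Asub: "A \<subseteq> {1..m}" using rk_sub[OF fin] by (simp add: A_def m_def)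
    have jA: "A \<inter> {j} = {}" using Asub by (auto simp: j_def)
    have ev: "evalP gmul gone gsmul n q (wb S0) (wc S0) \<in> center (grass t) gmul"
      using q wb_in wc_in[OF fin cS0] unfolding CP_def by blast
    have ev2: "evalP gmul gone gsmul n q (wb S0) (wc S0) = gsmul (sig n S0 q) (gmono A)"
      using eval_witness[OF S0(1) cS0, where q=q] by (simp add: A_def)
    have jg: "gmono {j} \<in> grass t" using mt by (auto simp: grass_def gmono_def j_def)
    have "gmul (gsmul (sig n S0 q) (gmono A)) (gmono {j}) = gmul (gmono {j}) (gsmul (sig n S0 q) (gmono A))"
      using ev jg unfolding ev2 center_def by blast
    moreover have "gmul (gsmul (sig n S0 q) (gmono A)) (gmono {j}) = gsmul (sig n S0 q) (gsmul (gsign A {j}) (gmono (A \<union> {j}) :: 'f grass))"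
      using gmul_gmono[OF finA _ jA, where 'f='f] by (simp add: gmul_gsmul_left)
    moreover have "gmul (gmono {j}) (gsmul (sig n S0 q) (gmono A)) = gsmul (sig n S0 q) (gsmul (gsign {j} A) (gmono (A \<union> {j}) :: 'f grass))"
      using gmul_gmono[of "{j}" A, where 'f='f] jA finA by (simp add: gmul_gsmul_right Int_commute Un_commute)
    ultimately have "gsmul (sig n S0 q) (gsmul (gsign A {j}) (gmono (A \<union> {j}))) =
        gsmul (sig n S0 q) (gsmul (gsign {j} A) (gmono (A \<union> {j}) :: 'f grass))" by simp
    then have "gsmul (sig n S0 q) (gsmul (gsign A {j}) (gmono (A \<union> {j}))) (A \<union> {j}) =
        gsmul (sig n S0 q) (gsmul (gsign {j} A) (gmono (A \<union> {j}) :: 'f grass)) (A \<union> {j})" by simp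
    then have e: "sig n S0 q * gsign A {j} = sig n S0 q * (gsign {j} A :: 'f)"
      by (simp add: gsmul_def gmono_def)
    have "gsign A {j} * gsign {j} A = ((-1) ^ (m * 1) :: 'f)"
      using gsign_swap[OF finA _ jA] cardA by simp
    also have "\<dots> = -1" using S0(2) by (simp add: m_def)
    finally have uw: "gsign A {j} * gsign {j} A = (-1 :: 'f)" .
    have "sig n S0 q * gsign A {j} * gsign {j} A = sig n S0 q * gsign {j} A * gsign {j} A"
      using e by simp
    then have "- sig n S0 q = sig n S0 q"
      using uw gsign_sq[of "{j}" A, where 'f='f] by (simp add: mult.assoc)
    then have "sig n S0 q = 0" using char0_self_neg by (metis minus_minus) }
  then show "q \<in> K n {S. S \<subseteq> {..<n} \<and> odd (card S) \<and> card S \<le> 2*k}"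
    using q unfolding K_def CP_def by blast
next
  fix q :: "'f mpoly"
  assume q: "q \<in> K n {S. S \<subseteq> {..<n} \<and> odd (card S) \<and> card S \<le> 2*k}"
  { fix b c :: "nat \<Rightarrow> 'f grass" assume bc: "\<forall>i. b i \<in> grass0 t" "\<forall>i. c i \<in> grass1 t"
    define f where "f S = gsmul (sig n S q) (EE n S b c)" for S
    have ex: "evalP gmul gone gsmul n q b c = (\<Sum>S\<in>Pow {..<n}. f S)"
      unfolding f_def by (rule evalP_expand) (use bc in auto)
    have fg: "f S \<in> grass t" if "S \<in> Pow {..<n}" for S
      unfolding f_def by (rule gsmul_grass) (use EE_props[of b t c S n] bc that in auto)
    have fc: "gmul (f S) a = gmul a (f S)" if S: "S \<in> Pow {..<n}" and a: "a \<in> grass t" for S a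
    proof -
      have h: "EE n S b c \<in> grass t \<and> hom (EE n S b c) (odd (card S)) \<and> lowdeg (card S) (EE n S b c)"
        by (rule EE_props) (use bc S in auto)
      have "gmul (EE n S b c) a = gmul a (EE n S b c)" if "\<not> (odd (card S) \<and> card S \<le> 2*k)"
      proof (cases "odd (card S)")
        case False then show ?thesis using h comm_even by auto
      next
        case True
        then have "t \<le> card S" using that assms by auto
        then show ?thesis using h comm_top[of _ t a] a lowdeg_mono by blast
      qed
      moreover have "sig n S q = 0" if "odd (card S) \<and> card S \<le> 2*k"
        using q S that unfolding K_def by auto
      ultimately show ?thesis unfolding f_def
        by (cases "odd (card S) \<and> card S \<le> 2*k") (auto simp: gmul_gsmul_left gmul_gsmul_right)
    qed
    have "evalP gmul gone gsmul n q b c \<in> center (grass t) gmul"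
      unfolding center_def ex
    proof (intro CollectI conjI ballI)
      show "(\<Sum>S\<in>Pow {..<n}. f S) \<in> grass t" by (rule sum_grass) (rule fg)
      fix a :: "'f grass" assume a: "a \<in> grass t"
      show "gmul (\<Sum>S\<in>Pow {..<n}. f S) a = gmul a (\<Sum>S\<in>Pow {..<n}. f S)"
        unfolding gmul_sum_left gmul_sum_right using fc[OF _ a] by simp
    qed }
  then show "q \<in> CP gmul gone gsmul (grass t) (grass0 t) (grass1 t) n"
    using q unfolding K_def CP_def by blast
qed

context vector_space begin

lemma lin_sum:
  assumes "subspace W" "\<And>x y. x \<in> W \<Longrightarrow> y \<in> W \<Longrightarrow> T (x + y) = T x + T y"
    "\<And>c x. x \<in> W \<Longrightarrow> T (c *s x) = c *s T x" "\<And>i. i \<in> I \<Longrightarrow> v i \<in> W"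
  shows "T (\<Sum>i\<in>I. v i) = (\<Sum>i\<in>I. T (v i))"
  using assms(4)
proof (induction I rule: infinite_finite_induct)
  case (infinite A)
  have "T 0 = T (0 *s 0)" by simp
  also have "\<dots> = 0" using assms(1,3) subspace_0 by (metis scale_zero_left)
  finally show ?case using infinite by simp
next
  case empty
  have "T 0 = T (0 *s 0)" by simp
  also have "\<dots> = 0" using assms(1,3) subspace_0 by (metis scale_zero_left)
  finally show ?case by simp
next
  case (insert x F)
  have "(\<Sum>i\<in>F. v i) \<in> W" using insert.prems assms(1) by (intro subspace_sum) auto
  then show ?case using insert assms(2) by simp
qed

lemma trace_indep:
  assumes B: "independent B" "span B = W" "finite B"
    and B': "independent B'" "span B' = W" "finite B'"
    and T: "\<And>x y. x \<in> W \<Longrightarrow> y \<in> W \<Longrightarrow> T (x + y) = T x + T y"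
       "\<And>c x. x \<in> W \<Longrightarrow> T (c *s x) = c *s T x" "\<And>x. x \<in> W \<Longrightarrow> T x \<in> W"
  shows "(\<Sum>b\<in>B. representation B (T b) b) = (\<Sum>b\<in>B'. representation B' (T b) b)"
proof -
  have sW: "subspace W" using B(2) subspace_span by blast
  have BW: "B \<subseteq> W" "B' \<subseteq> W" using B(2) B'(2) span_superset by auto
  let ?r = "representation B'" and ?q = "representation B"
  have step1: "?q (T b) b = (\<Sum>b'\<in>B'. ?r b b' * ?q (T b') b)" if b: "b \<in> B" for b
  proof -
    have "b = (\<Sum>b'\<in>B'. ?r b b' *s b')"
      by (rule sum_representation_eq[symmetric]) (use B' BW b in auto)
    then have "T b = T (\<Sum>b'\<in>B'. ?r b b' *s b')" by simp
    also have "\<dots> = (\<Sum>b'\<in>B'. T (?r b b' *s b'))"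
      by (rule lin_sum[OF sW T(1,2)]) (use BW sW in \<open>auto intro: subspace_scale\<close>)
    also have "\<dots> = (\<Sum>b'\<in>B'. ?r b b' *s T b')"
      by (rule sum.cong) (use BW T(2) in auto)
    finally have "?q (T b) = ?q (\<Sum>b'\<in>B'. ?r b b' *s T b')" by simp
    also have "\<dots> = (\<lambda>x. \<Sum>b'\<in>B'. ?q (?r b b' *s T b') x)"
      by (rule representation_sum) (use B BW T(3) in \<open>auto intro: span_scale\<close>)
    finally have "?q (T b) b = (\<Sum>b'\<in>B'. ?q (?r b b' *s T b') b)" by simp
    also have "\<dots> = (\<Sum>b'\<in>B'. ?r b b' * ?q (T b') b)"
      by (rule sum.cong) (use B BW T(3) in \<open>auto simp: representation_scale\<close>)
    finally show ?thesis .
  qed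
  have step2: "(\<Sum>b\<in>B. ?q (T b') b * ?r b b') = ?r (T b') b'" if b': "b' \<in> B'" for b'
  proof -
    have Tb': "T b' \<in> span B" using B BW T(3) b' by auto
    have "?r (T b') = ?r (\<Sum>b\<in>B. ?q (T b') b *s b)"
      using sum_representation_eq[OF B(1) Tb' B(3) order_refl] by simp
    also have "\<dots> = (\<lambda>x. \<Sum>b\<in>B. ?r (?q (T b') b *s b) x)"
      by (rule representation_sum) (use B' BW in \<open>auto intro: span_scale\<close>)
    finally have "?r (T b') b' = (\<Sum>b\<in>B. ?r (?q (T b') b *s b) b')" by simp
    also have "\<dots> = (\<Sum>b\<in>B. ?q (T b') b * ?r b b')"
      by (rule sum.cong) (use B' BW in \<open>auto simp: representation_scale\<close>)
    finally show ?thesis by simp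
  qed
  have "(\<Sum>b\<in>B. ?q (T b) b) = (\<Sum>b\<in>B. \<Sum>b'\<in>B'. ?r b b' * ?q (T b') b)"
    by (rule sum.cong) (auto simp: step1)
  also have "\<dots> = (\<Sum>b'\<in>B'. \<Sum>b\<in>B. ?q (T b') b * ?r b b')"
    by (subst sum.swap) (simp add: mult.commute)
  also have "\<dots> = (\<Sum>b'\<in>B'. ?r (T b') b')"
    by (rule sum.cong) (auto simp: step2)
  finally show ?thesis .
qed

lemma trace_split:
  assumes BC: "independent (B \<union> C)" "finite B" "finite C" "B \<inter> C = {}"
    and T: "\<And>x. x \<in> span B \<Longrightarrow> T x \<in> span B"
  shows "(\<Sum>v\<in>B \<union> C. representation (B \<union> C) (T v) v) =
    (\<Sum>v\<in>B. representation B (T v) v) + (\<Sum>v\<in>C. representation (B \<union> C) (T v) v)"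
proof -
  have "(\<Sum>v\<in>B \<union> C. representation (B \<union> C) (T v) v) =
     (\<Sum>v\<in>B. representation (B \<union> C) (T v) v) + (\<Sum>v\<in>C. representation (B \<union> C) (T v) v)"
    by (rule sum.union_disjoint) (use BC in auto)
  moreover have "(\<Sum>v\<in>B. representation (B \<union> C) (T v) v) = (\<Sum>v\<in>B. representation B (T v) v)"
  proof (rule sum.cong[OF refl])
    fix v assume "v \<in> B"
    then have "T v \<in> span B" using T span_base by blast
    then show "representation (B \<union> C) (T v) v = representation B (T v) v"
      using representation_extend[OF BC(1)] by auto
  qed
  ultimately show ?thesis by simp
qed

end

interpretation pv: vector_space "pscale :: 'f::field \<Rightarrow> 'f mpoly \<Rightarrow> 'f mpoly"
  by unfold_locales (auto simp: pscale_def fun_eq_iff algebra_simps)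

lemma sig_add: "sig n S (p + q) = sig n S p + sig n S q"
  by (simp add: sig_def sum.distrib algebra_simps)

lemma sig_scale: "sig n S (pscale c p) = c * sig n S p"
  by (simp add: sig_def pscale_def sum_distrib_left algebra_simps)

lemma sig_zero: "sig n S 0 = 0"
  by (simp add: sig_def)

lemma sig_diff: "sig n S (p - q) = sig n S p - sig n S q"
  by (simp add: sig_def sum_subtractf algebra_simps)

lemma sig_sum: "sig n S (\<Sum>i\<in>I. f i) = (\<Sum>i\<in>I. sig n S (f i))"
proof (induction I rule: infinite_finite_induct)
  case (infinite A) then show ?case by (metis sig_zero sum.infinite)
next
  case empty then show ?case by (metis sig_zero sum.empty)
next
  case (insert x F) then show ?case by (metis sig_add sum.insert)
qed

lemma sig_span:
  assumes "\<And>x. x \<in> X \<Longrightarrow> sig n S x = 0" "y \<in> pv.span X"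
  shows "sig n S y = (0::'f::field)"
proof -
  have "pv.span X \<subseteq> {y. sig n S y = (0::'f)}"
  proof (rule pv.span_minimal)
    show "X \<subseteq> {y. sig n S y = 0}" using assms(1) by auto
    show "pv.subspace {y. sig n S y = (0::'f)}"
      by (rule pv.subspaceI) (auto simp: sig_zero sig_add sig_scale)
  qed
  then show ?thesis using assms(2) by auto
qed

lemma K_subspace: "pv.subspace (K n Z :: 'f::field mpoly set)"
proof (rule pv.subspaceI)
  show "0 \<in> K n Z" by (simp add: K_def Pgr_def sig_zero)
  fix x y :: "'f mpoly" assume "x \<in> K n Z" "y \<in> K n Z"
  then show "x + y \<in> K n Z" by (auto simp: K_def Pgr_def sig_add)
next
  fix c :: 'f and x :: "'f mpoly" assume x: "x \<in> K n Z"
  have "pscale c x \<in> Pgr n" using x by (auto simp: K_def Pgr_def pscale_def)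
  moreover have "\<forall>S\<in>Z. sig n S (pscale c x) = 0" using x by (simp add: K_def sig_scale)
  ultimately show "pscale c x \<in> K n Z" by (simp add: K_def)
qed

lemma K_empty: "K n {} = Pgr n"
  by (simp add: K_def)

lemma K_anti: "Z \<subseteq> Z' \<Longrightarrow> K n Z' \<subseteq> K n Z"
  by (auto simp: K_def)

definition delta :: "(nat set \<times> (nat \<Rightarrow> nat)) \<Rightarrow> 'f::field mpoly" where
  "delta m = (\<lambda>x. if x = m then 1 else 0)"

lemma Pgr_span: "Pgr n \<subseteq> pv.span (delta ` mmonos n :: 'f::field mpoly set)"
proof
  fix p :: "'f mpoly" assume p: "p \<in> Pgr n"
  have "p = (\<Sum>m\<in>mmonos n. pscale (p m) (delta m))"
  proof
    fix x
    have "(\<Sum>m\<in>mmonos n. pscale (p m) (delta m)) x = (\<Sum>m\<in>mmonos n. if m = x then p x else 0)"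
      by (simp add: sum_fun_apply pscale_def delta_def) (rule sum.cong, auto)
    also have "\<dots> = p x"
    proof (cases "x \<in> mmonos n")
      case True then show ?thesis using finite_mmonos[of n] by simp
    next
      case False then show ?thesis using p unfolding Pgr_def by (cases x) (auto intro!: sum.neutral)
    qed
    finally show "p x = (\<Sum>m\<in>mmonos n. pscale (p m) (delta m)) x" by simp
  qed
  also have "\<dots> \<in> pv.span (delta ` mmonos n)"
    by (intro pv.span_sum pv.span_scale pv.span_base) auto
  finally show "p \<in> pv.span (delta ` mmonos n)" .
qed

lemma indep_finite: "pv.independent B \<Longrightarrow> B \<subseteq> Pgr n \<Longrightarrow> finite (B :: 'f::field mpoly set)"
  using pv.independent_span_bound[of "delta ` mmonos n" B] Pgr_span[of n] finite_mmonos[of n] by auto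

definition vv :: "nat \<Rightarrow> nat set \<Rightarrow> 'f::field mpoly" where
  "vv n S = (\<lambda>(S', p). if S' = S \<and> p \<in> perms n then sS n S p else 0)"

lemma prod_list_sq: "(\<And>y. y \<in> set L \<Longrightarrow> h y * h y = (1::'f::field)) \<Longrightarrow> prod_list (map h L) * prod_list (map h L) = 1"
  by (induction L) (auto simp: algebra_simps)

lemma sgnL_sq: "sgnL S L * sgnL S L = (1::'f::field)"
proof (induction L)
  case Nil then show ?case by simp
next
  case (Cons x L)
  let ?h = "\<lambda>y. if x \<in> S \<and> y \<in> S \<and> y < x then -1 else (1::'f)"
  have "prod_list (map ?h L) * prod_list (map ?h L) = 1" by (rule prod_list_sq) auto
  then show ?case using Cons by (simp add: algebra_simps)
qed

lemma sS_sq: "sS n S p * sS n S p = (1::'f::field)"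
  by (simp add: sS_def sgnL_sq)

lemma card_perms: "card (perms n) = fact n"
  unfolding perms_def by (rule card_permutations) auto

lemma vv_Pgr: "S \<subseteq> {..<n} \<Longrightarrow> vv n S \<in> Pgr n"
  by (auto simp: vv_def Pgr_def mmonos_def perms_def)

lemma sig_vv: "sig n S' (vv n S) = (if S' = S then of_nat (fact n) else (0::'f::field))"
proof (cases "S' = S")
  case True
  have "sig n S (vv n S) = (\<Sum>p\<in>perms n. (1::'f))"
    unfolding sig_def by (rule sum.cong) (auto simp: vv_def sS_sq)
  then show ?thesis using True by (simp add: card_perms)
next
  case False then show ?thesis by (simp add: sig_def vv_def)
qed

lemma vv_K: "S \<subseteq> {..<n} \<Longrightarrow> S \<notin> Z \<Longrightarrow> (vv n S :: 'f::field mpoly) \<in> K n Z"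
proof -
  assume a: "S \<subseteq> {..<n}" "S \<notin> Z"
  have "\<forall>S'\<in>Z. sig n S' (vv n S) = (0::'f)"
  proof
    fix S' assume "S' \<in> Z"
    then have "S' \<noteq> S" using a by blast
    then show "sig n S' (vv n S) = (0::'f)" by (simp add: sig_vv)
  qed
  then show ?thesis unfolding K_def using vv_Pgr[OF a(1)] by blast
qed

lemma fact_nz: "(of_nat (fact n) :: 'f::field_char_0) \<noteq> 0"
  by simp

lemma K_ext:
  assumes Z: "Z \<subseteq> Z'" "Z' \<subseteq> Pow {..<n}"
    and B: "B \<subseteq> K n Z'" "pv.independent B" "pv.span B = K n Z'"
  shows "pv.independent (B \<union> vv n ` (Z' - Z)) \<and> pv.span (B \<union> vv n ` (Z' - Z)) = (K n Z :: 'f::field_char_0 mpoly set)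
    \<and> B \<inter> vv n ` (Z' - Z) = {} \<and> inj_on (vv n :: nat set \<Rightarrow> 'f mpoly) (Z' - Z) \<and> finite B"
proof (intro conjI)
  have "finite Z'" by (rule finite_subset[OF Z(2)]) simp
  then have finZ: "finite (Z' - Z)" by simp
  have fn: "(of_nat (fact n) :: 'f) \<noteq> 0" by (rule fact_nz)
  have BP: "B \<subseteq> Pgr n" using B(1) unfolding K_def by blast
  show "finite B" by (rule indep_finite[OF B(2) BP])
  have sigB: "sig n T x = (0::'f)" if "x \<in> B" "T \<in> Z'" for x T
    using that B(1) unfolding K_def by blast
  show inj: "inj_on (vv n :: nat set \<Rightarrow> 'f mpoly) (Z' - Z)"
  proof (rule inj_onI)
    fix S T assume "S \<in> Z' - Z" "T \<in> Z' - Z" "(vv n S :: 'f mpoly) = vv n T"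
    then have e: "sig n S (vv n S) = (sig n S (vv n T) :: 'f)" by simp
    show "S = T"
    proof (rule ccontr)
      assume "S \<noteq> T"
      then show False using e fn by (simp add: sig_vv)
    qed
  qed
  show "B \<inter> vv n ` (Z' - Z) = {}"
  proof (rule ccontr)
    assume "B \<inter> vv n ` (Z' - Z) \<noteq> {}"
    then obtain T where T: "T \<in> Z' - Z" "vv n T \<in> B" by blast
    then have "sig n T (vv n T) = (0::'f)" using sigB by blast
    then show False using fn by (simp add: sig_vv)
  qed
  have indF: "pv.independent (B \<union> vv n ` F)" if "F \<subseteq> Z' - Z" for F
    using finite_subset[OF that finZ] that
  proof (induction F rule: finite_induct)
    case empty then show ?case using B by simp
  next
    case (insert T F)
    have TZ: "T \<in> Z'" "T \<notin> F" using insert by auto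
    have nsp: "vv n T \<notin> pv.span (B \<union> vv n ` F)"
    proof
      assume a: "vv n T \<in> pv.span (B \<union> vv n ` F)"
      have "sig n T (vv n T) = (0::'f)"
      proof (rule sig_span[OF _ a])
        fix x assume x: "x \<in> B \<union> vv n ` F"
        show "sig n T x = (0::'f)"
        proof (cases "x \<in> B")
          case True then show ?thesis using sigB TZ by blast
        next
          case False
          then obtain T' where "T' \<in> F" "x = vv n T'" using x by blast
          then have "T' \<noteq> T" "x = vv n T'" using TZ by auto
          then show ?thesis by (simp add: sig_vv)
        qed
      qed
      then show False using fn by (simp add: sig_vv)
    qed
    have "B \<union> vv n ` insert T F = insert (vv n T) (B \<union> vv n ` F)" by auto
    moreover have "pv.independent (B \<union> vv n ` F)" using insert by auto
    ultimately show ?case using pv.independent_insertI[OF nsp] by simp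
  qed
  show "pv.independent (B \<union> vv n ` (Z' - Z))" using indF by simp
  show "pv.span (B \<union> vv n ` (Z' - Z)) = K n Z"
  proof
    show "pv.span (B \<union> vv n ` (Z' - Z)) \<subseteq> K n Z"
    proof (rule pv.span_minimal[OF _ K_subspace])
      have "B \<subseteq> K n Z" using B(1) K_anti[OF Z(1)] by blast
      moreover have "vv n ` (Z' - Z) \<subseteq> K n Z"
      proof
        fix x assume "x \<in> vv n ` (Z' - Z)"
        then obtain T where T: "T \<in> Z' - Z" "x = vv n T" by blast
        then have "T \<subseteq> {..<n}" "T \<notin> Z" using Z by auto
        then show "x \<in> K n Z" using T vv_K by blast
      qed
      ultimately show "B \<union> vv n ` (Z' - Z) \<subseteq> K n Z" by blast
    qed
    show "K n Z \<subseteq> pv.span (B \<union> vv n ` (Z' - Z))"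
    proof
      fix p :: "'f mpoly" assume p: "p \<in> K n Z"
      define r where "r = (\<Sum>T\<in>Z' - Z. pscale (sig n T p / of_nat (fact n)) (vv n T :: 'f mpoly))"
      define q where "q = p - r"
      have rK: "r \<in> K n {}" unfolding r_def
      proof (rule pv.subspace_sum[OF K_subspace])
        fix T assume "T \<in> Z' - Z"
        then have "T \<subseteq> {..<n}" using Z by auto
        then have "vv n T \<in> K n {}" by (simp add: K_empty vv_Pgr)
        then show "pscale (sig n T p / of_nat (fact n)) (vv n T) \<in> K n {}"
          by (rule pv.subspace_scale[OF K_subspace])
      qed
      have sr: "sig n S r = (if S \<in> Z' - Z then sig n S p else 0)" for S
      proof -
        have "sig n S r = (\<Sum>T\<in>Z' - Z. sig n T p / of_nat (fact n) * sig n S (vv n T))"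
          unfolding r_def sig_sum by (simp add: sig_scale)
        also have "\<dots> = (\<Sum>T\<in>Z' - Z. if S = T then sig n S p else 0)"
          by (rule sum.cong[OF refl]) (use fn in \<open>simp add: sig_vv\<close>)
        also have "\<dots> = (if S \<in> Z' - Z then sig n S p else 0)"
          using finZ by (simp add: sum.delta)
        finally show ?thesis .
      qed
      have pK: "p \<in> K n {}" using K_anti[of "{}" Z n] p by blast
      have qP: "q \<in> K n {}" unfolding q_def by (rule pv.subspace_diff[OF K_subspace pK rK])
      have "q \<in> K n Z'"
      proof -
        have "sig n S q = 0" if "S \<in> Z'" for S
        proof (cases "S \<in> Z")
          case True
          then have "sig n S p = 0" using p unfolding K_def by blast
          then show ?thesis using True by (simp add: q_def sig_diff sr)
        next
          case False
          then show ?thesis using that by (simp add: q_def sig_diff sr)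
        qed
        then show ?thesis using qP unfolding K_def by blast
      qed
      then have "q \<in> pv.span (B \<union> vv n ` (Z' - Z))" using B(3) pv.span_mono[of B "B \<union> vv n ` (Z' - Z)"] by blast
      moreover have "r \<in> pv.span (B \<union> vv n ` (Z' - Z))"
        unfolding r_def by (intro pv.span_sum pv.span_scale pv.span_base) auto
      ultimately have "q + r \<in> pv.span (B \<union> vv n ` (Z' - Z))" by (rule pv.span_add)
      then show "p \<in> pv.span (B \<union> vv n ` (Z' - Z))" by (simp add: q_def)
    qed
  qed
qed

lemma K_basis_exists:
  obtains B where "B \<subseteq> K n Z" "pv.independent B" "pv.span B = (K n Z :: 'f::field mpoly set)" "finite B"
    "card B = pv.dim (K n Z :: 'f mpoly set)"
proof -
  obtain B :: "'f mpoly set" where B: "B \<subseteq> K n Z" "pv.independent B" "K n Z \<subseteq> pv.span B" "card B = pv.dim (K n Z :: 'f mpoly set)"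
    by (rule pv.basis_exists[of "K n Z :: 'f mpoly set"])
  have "pv.span B = K n Z" using B pv.span_minimal[OF B(1) K_subspace] by auto
  moreover have "finite B" using B indep_finite[of B n] by (auto simp: K_def)
  ultimately show ?thesis using that B by blast
qed

lemma K_dim:
  assumes "Z \<subseteq> Z'" "Z' \<subseteq> Pow {..<n}"
  shows "pv.dim (K n Z :: 'f::field_char_0 mpoly set) = pv.dim (K n Z' :: 'f mpoly set) + card (Z' - Z)"
proof -
  obtain B where B: "B \<subseteq> K n Z'" "pv.independent B" "pv.span B = (K n Z' :: 'f mpoly set)" "finite B"
    "card B = pv.dim (K n Z' :: 'f mpoly set)" by (rule K_basis_exists)
  note E = K_ext[OF assms B(1-3)]
  have finZ: "finite (Z' - Z)" using assms by (meson finite_Diff finite_Pow_iff finite_lessThan finite_subset)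
  have "pv.dim (K n Z :: 'f mpoly set) = pv.dim (pv.span (B \<union> vv n ` (Z' - Z)))" using E by simp
  also have "\<dots> = card (B \<union> vv n ` (Z' - Z))" using E pv.dim_span_eq_card_independent by blast
  also have "\<dots> = card B + card (vv n ` (Z' - Z) :: 'f mpoly set)"
    by (rule card_Un_disjoint) (use E finZ in auto)
  also have "card (vv n ` (Z' - Z) :: 'f mpoly set) = card (Z' - Z)" using E by (simp add: card_image)
  finally show ?thesis using B by simp
qed

lemma Esg_sq: "Esg s S * Esg s S = (1::'f::field)"
proof -
  have "Esg s S * Esg s S = PP (\<lambda>x y. flipS s S x y * flipS s S x y) S"
    unfolding Esg_def PP_def prod.distrib[symmetric] ..
  also have "\<dots> = (1::'f)" unfolding PP_def by (rule prod.neutral) (auto intro!: prod.neutral simp: flipS_def)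
  finally show ?thesis .
qed

lemma sS_comp:
  assumes "s permutes {..<n}" "p permutes {..<n}" "S \<subseteq> {..<n}"
  shows "sS n (s ` S) (s \<circ> p) = sS n S p * (Esg s S :: 'f::field)"
proof -
  have L: "distinct (map p [0..<n])" "set (map p [0..<n]) = {..<n}"
    using permutes_inj_on[OF assms(2)] permutes_image[OF assms(2)] by (auto simp: distinct_map atLeast0LessThan)
  have "sS n (s ` S) (s \<circ> p) = (sgnL (s ` S) (map s (map p [0..<n])) :: 'f)"
    by (simp add: sS_def)
  also have "\<dots> = sgnL S (map p [0..<n]) * Esg s S"
    by (rule sgnL_map_Esg) (use L permutes_inj_on[OF assms(1)] assms(3) in auto)
  finally show ?thesis by (simp add: sS_def)
qed

lemma act_add: "act a s n (p + q) = act a s n p + act a s n q"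
  by (rule ext) (auto simp: act_def algebra_simps split: prod.splits)

lemma act_scale: "act a s n (pscale c p) = pscale c (act a s n p)"
  by (rule ext) (auto simp: act_def pscale_def algebra_simps split: prod.splits)

lemma act_Pgr: "act a s n p \<in> Pgr n"
  by (auto simp: act_def Pgr_def)

lemma perm_img:
  assumes "s permutes {..<n}"
  shows "s ` (inv s ` X) = X" "inv s ` (s ` X) = X"
  using permutes_inv_o[OF assms] by (simp_all add: image_comp)

lemma sig_act:
  assumes s: "s permutes {..<n}" and S: "S \<subseteq> {..<n}"
  shows "sig n (s ` S) (act a s n p) = (\<Prod>i\<in>s ` S. a i) * Esg s S * (sig n S p :: 'f::field)"
proof -
  have sS': "s ` S \<subseteq> {..<n}" using S permutes_image[OF s] by auto
  have "sig n (s ` S) (act a s n p) = (\<Sum>p'\<in>perms n. sS n (s ` S) p' * ((\<Prod>i\<in>s ` S. a i) * p (S, inv s \<circ> p')))"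
    unfolding sig_def
    by (rule sum.cong[OF refl]) (use sS' perm_img[OF s] in \<open>auto simp: act_def mmonos_def perms_def\<close>)
  also have "\<dots> = (\<Sum>q\<in>perms n. sS n (s ` S) (s \<circ> q) * ((\<Prod>i\<in>s ` S. a i) * p (S, inv s \<circ> (s \<circ> q))))"
  proof (rule sum.reindex_bij_witness[where i="\<lambda>q. s \<circ> q" and j="\<lambda>p'. inv s \<circ> p'"])
    fix q assume "q \<in> perms n"
    show "s \<circ> q \<in> perms n" using \<open>q \<in> perms n\<close> s by (simp add: perms_def permutes_compose)
    show "inv s \<circ> (s \<circ> q) = q" using permutes_inv_o(2)[OF s] by (simp add: o_assoc)
  next
    fix p' assume "p' \<in> perms n"
    show "inv s \<circ> p' \<in> perms n" using \<open>p' \<in> perms n\<close> permutes_inv[OF s] by (simp add: perms_def permutes_compose)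
    show "s \<circ> (inv s \<circ> p') = p'" using permutes_inv_o(1)[OF s] by (simp add: o_assoc)
  qed (simp add: o_assoc permutes_inv_o[OF s])
  also have "\<dots> = (\<Sum>q\<in>perms n. (\<Prod>i\<in>s ` S. a i) * Esg s S * (sS n S q * p (S, q)))"
  proof (rule sum.cong[OF refl])
    fix q assume q: "q \<in> perms n"
    have "inv s \<circ> (s \<circ> q) = q" using permutes_inv_o(2)[OF s] by (simp add: o_assoc)
    moreover have "sS n (s ` S) (s \<circ> q) = sS n S q * (Esg s S :: 'f)"
      by (rule sS_comp[OF s _ S]) (use q in \<open>simp add: perms_def\<close>)
    ultimately show "sS n (s ` S) (s \<circ> q) * ((\<Prod>i\<in>s ` S. a i) * p (S, inv s \<circ> (s \<circ> q))) =
        (\<Prod>i\<in>s ` S. a i) * Esg s S * (sS n S q * p (S, q))" by (simp add: algebra_simps)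
  qed
  also have "\<dots> = (\<Prod>i\<in>s ` S. a i) * Esg s S * sig n S p"
    by (simp add: sig_def sum_distrib_left)
  finally show ?thesis .
qed

definition Zc :: "nat \<Rightarrow> (nat \<Rightarrow> bool) \<Rightarrow> nat set set" where
  "Zc n P = {S. S \<subseteq> {..<n} \<and> P (card S)}"

lemma Zc_perm:
  assumes s: "s permutes {..<n}" and "S \<in> Zc n P"
  shows "s ` S \<in> Zc n P" "inv s ` S \<in> Zc n P"
proof -
  have S: "S \<subseteq> {..<n}" "P (card S)" using assms(2) by (auto simp: Zc_def)
  have "card (s ` S) = card S"
    using permutes_inj_on[OF s] by (simp add: card_image inj_on_subset[OF _ subset_UNIV])
  then show "s ` S \<in> Zc n P" using S permutes_image[OF s] by (auto simp: Zc_def)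
  have si: "inv s permutes {..<n}" by (rule permutes_inv[OF s])
  have "card (inv s ` S) = card S"
    using permutes_inj_on[OF si] by (simp add: card_image inj_on_subset[OF _ subset_UNIV])
  then show "inv s ` S \<in> Zc n P" using S permutes_image[OF si] by (auto simp: Zc_def)
qed

lemma act_K:
  assumes s: "s permutes {..<n}" and p: "p \<in> K n (Zc n P)"
  shows "act a s n p \<in> (K n (Zc n P) :: 'f::field mpoly set)"
proof -
  have "sig n S' (act a s n p) = 0" if S': "S' \<in> Zc n P" for S'
  proof -
    define S where "S = inv s ` S'"
    have SZ: "S \<in> Zc n P" using Zc_perm(2)[OF s S'] by (simp add: S_def)
    have "s ` S = S'" by (simp add: S_def perm_img[OF s])
    moreover have "S \<subseteq> {..<n}" using SZ by (simp add: Zc_def)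
    ultimately have "sig n S' (act a s n p) = (\<Prod>i\<in>s ` S. a i) * Esg s S * sig n S p"
      using sig_act[OF s] by metis
    moreover have "sig n S p = 0" using p SZ by (simp add: K_def)
    ultimately show ?thesis by simp
  qed
  then show ?thesis using act_Pgr by (simp add: K_def)
qed

lemma act_vv:
  assumes s: "s permutes {..<n}" and S: "S \<subseteq> {..<n}"
  shows "act a s n (vv n S) = pscale ((\<Prod>i\<in>s ` S. a i) * Esg s S) (vv n (s ` S) :: 'f::field mpoly)"
proof (rule ext, clarify)
  fix S' p'
  have sS': "s ` S \<subseteq> {..<n}" using S permutes_image[OF s] by auto
  show "act a s n (vv n S) (S', p') = pscale ((\<Prod>i\<in>s ` S. a i) * Esg s S) (vv n (s ` S)) (S', p')"
  proof (cases "(S', p') \<in> mmonos n")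
    case False
    then have "\<not> (S' = s ` S \<and> p' \<in> perms n)" using sS' by (auto simp: mmonos_def perms_def)
    then show ?thesis using False by (auto simp: act_def vv_def pscale_def)
  next
    case True
    then have p': "p' permutes {..<n}" "S' \<subseteq> {..<n}" by (auto simp: mmonos_def)
    have ip: "inv s \<circ> p' \<in> perms n" using p' permutes_inv[OF s] by (simp add: perms_def permutes_compose)
    have eqv: "inv s ` S' = S \<longleftrightarrow> S' = s ` S" using perm_img[OF s] by metis
    show ?thesis
    proof (cases "S' = s ` S")
      case False
      then show ?thesis using True eqv by (simp add: act_def vv_def pscale_def)
    next
      case st: True
      have "sS n (s ` S) p' = sS n (s ` S) (s \<circ> (inv s \<circ> p'))"
        using permutes_inv_o(1)[OF s] by (simp add: o_assoc)
      also have "\<dots> = sS n S (inv s \<circ> p') * (Esg s S :: 'f)"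
        by (rule sS_comp[OF s _ S]) (use ip in \<open>simp add: perms_def\<close>)
      finally have e: "sS n (s ` S) p' = sS n S (inv s \<circ> p') * (Esg s S :: 'f)" .
      have "act a s n (vv n S) (S', p') = (\<Prod>i\<in>s ` S. a i) * (sS n S (inv s \<circ> p') :: 'f)"
        using True st eqv ip by (simp add: act_def vv_def)
      also have "\<dots> = (\<Prod>i\<in>s ` S. a i) * Esg s S * sS n (s ` S) p'"
        using Esg_sq[of s S, where 'f='f] by (simp add: e algebra_simps)
      also have "\<dots> = pscale ((\<Prod>i\<in>s ` S. a i) * Esg s S) (vv n (s ` S)) (S', p')"
        using st p' by (simp add: pscale_def vv_def perms_def)
      finally show ?thesis .
    qed
  qed
qed

lemma trace_on_basis:
  assumes B: "B \<subseteq> K n Z" "pv.independent B" "pv.span B = (K n Z :: 'f::field mpoly set)" "finite B"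
    and T: "\<And>x y. x \<in> K n Z \<Longrightarrow> y \<in> K n Z \<Longrightarrow> T (x + y) = T x + T y"
      "\<And>c x. x \<in> K n Z \<Longrightarrow> T (pscale c x) = pscale c (T x)" "\<And>x. x \<in> K n Z \<Longrightarrow> T x \<in> K n Z"
  shows "trace_on (K n Z) T = (\<Sum>b\<in>B. pv.representation B (T b) b)"
proof -
  define B0 where "B0 = (SOME B. B \<subseteq> K n Z \<and> pv.independent B \<and> pv.span B = (K n Z :: 'f mpoly set))"
  have ex: "\<exists>B. B \<subseteq> K n Z \<and> pv.independent B \<and> pv.span B = (K n Z :: 'f mpoly set)"
    using K_basis_exists[of n Z, where 'f='f] by metis
  have P0: "B0 \<subseteq> K n Z" "pv.independent B0" "pv.span B0 = K n Z"
    using someI_ex[OF ex] unfolding B0_def by auto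
  have fin0: "finite B0" using P0 indep_finite[of B0 n] by (auto simp: K_def)
  have "trace_on (K n Z) T = (\<Sum>b\<in>B0. pv.representation B0 (T b) b)"
    unfolding trace_on_def Let_def B0_def ..
  also have "\<dots> = (\<Sum>b\<in>B. pv.representation B (T b) b)"
    by (rule pv.trace_indep) (use P0 fin0 B T in auto)
  finally show ?thesis .
qed

lemma K_trace:
  fixes a :: "nat \<Rightarrow> 'f::field_char_0"
  assumes s: "s permutes {..<n}" and PP': "\<And>i. P i \<Longrightarrow> P' i"
  shows "trace_on (K n (Zc n P)) (act a s n) = trace_on (K n (Zc n P')) (act a s n)
     + (\<Sum>S\<in>{S \<in> Zc n P' - Zc n P. s ` S = S}. (\<Prod>i\<in>S. a i) * Esg s S)"
proof -
  let ?Z = "Zc n P" and ?Z' = "Zc n P'" and ?T = "act a s n"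
  have ZZ: "?Z \<subseteq> ?Z'" "?Z' \<subseteq> Pow {..<n}" using PP' by (auto simp: Zc_def)
  have finZ: "finite (?Z' - ?Z)" by (rule finite_subset[of _ "Pow {..<n}"]) (use ZZ in auto)
  obtain B where B: "B \<subseteq> K n ?Z'" "pv.independent B" "pv.span B = (K n ?Z' :: 'f mpoly set)" "finite B"
    "card B = pv.dim (K n ?Z' :: 'f mpoly set)" by (rule K_basis_exists)
  define C where "C = (vv n ` (?Z' - ?Z) :: 'f mpoly set)"
  note E = K_ext[OF ZZ B(1-3), folded C_def]
  have finC: "finite C" unfolding C_def using finZ by simp
  have Tl: "?T (x + y) = ?T x + ?T y" "?T (pscale c x) = pscale c (?T x)" for x y c
    by (simp_all add: act_add act_scale)
  have TK: "?T x \<in> K n Q" if "x \<in> K n Q" "Q = Zc n R" for x Q R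
    using act_K[OF s] that by blast
  have "trace_on (K n ?Z) ?T = (\<Sum>v\<in>B \<union> C. pv.representation (B \<union> C) (?T v) v)"
  proof (rule trace_on_basis)
    show "B \<union> C \<subseteq> K n ?Z" using E pv.span_superset by blast
  qed (use E B finC Tl TK in auto)
  also have "\<dots> = (\<Sum>v\<in>B. pv.representation B (?T v) v) + (\<Sum>v\<in>C. pv.representation (B \<union> C) (?T v) v)"
    by (rule pv.trace_split) (use E B finC TK in auto)
  also have "(\<Sum>v\<in>B. pv.representation B (?T v) v) = trace_on (K n ?Z') ?T"
    by (rule trace_on_basis[symmetric]) (use B Tl TK in auto)
  also have "(\<Sum>v\<in>C. pv.representation (B \<union> C) (?T v) v) =
      (\<Sum>S\<in>?Z' - ?Z. pv.representation (B \<union> C) (?T (vv n S)) (vv n S))"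
    unfolding C_def using E by (simp add: sum.reindex)
  also have "\<dots> = (\<Sum>S\<in>?Z' - ?Z. if s ` S = S then (\<Prod>i\<in>S. a i) * Esg s S else 0)"
  proof (rule sum.cong[OF refl])
    fix S assume S: "S \<in> ?Z' - ?Z"
    have Ssub: "S \<subseteq> {..<n}" using S by (auto simp: Zc_def)
    have sS: "s ` S \<in> ?Z' - ?Z"
    proof -
      have "s ` S \<in> ?Z'" using Zc_perm(1)[OF s] S by blast
      moreover have "s ` S \<notin> ?Z"
      proof
        assume "s ` S \<in> ?Z"
        then have "inv s ` (s ` S) \<in> ?Z" by (rule Zc_perm(2)[OF s])
        then show False using S perm_img(2)[OF s] by simp
      qed
      ultimately show ?thesis by blast
    qed
    have inBC: "vv n (s ` S) \<in> B \<union> C" using sS by (simp add: C_def)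
    have "pv.representation (B \<union> C) (?T (vv n S)) (vv n S) =
        pv.representation (B \<union> C) (pscale ((\<Prod>i\<in>s ` S. a i) * Esg s S) (vv n (s ` S))) (vv n S)"
      using act_vv[OF s Ssub, of a] by simp
    also have "\<dots> = (\<Prod>i\<in>s ` S. a i) * Esg s S * pv.representation (B \<union> C) (vv n (s ` S)) (vv n S)"
    proof -
      have sp: "vv n (s ` S) \<in> pv.span (B \<union> C)" using inBC by (rule pv.span_base)
      have ind: "pv.independent (B \<union> C)" using E by blast
      show ?thesis using pv.representation_scale[OF ind sp] by simp
    qed
    also have "\<dots> = (\<Prod>i\<in>s ` S. a i) * Esg s S * (if vv n S = (vv n (s ` S) :: 'f mpoly) then 1 else 0)"
      using pv.representation_basis[of "B \<union> C" "vv n (s ` S)"] E inBC by auto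
    also have "\<dots> = (if s ` S = S then (\<Prod>i\<in>S. a i) * Esg s S else 0)"
    proof -
      have "(vv n S = (vv n (s ` S) :: 'f mpoly)) \<longleftrightarrow> s ` S = S"
        using E S sS unfolding inj_on_def by metis
      then show ?thesis by auto
    qed
    finally show "pv.representation (B \<union> C) (?T (vv n S)) (vv n S) = (if s ` S = S then (\<Prod>i\<in>S. a i) * Esg s S else 0)" .
  qed
  also have "\<dots> = (\<Sum>S\<in>{S \<in> ?Z' - ?Z. s ` S = S}. (\<Prod>i\<in>S. a i) * Esg s S)"
    using sum.inter_filter[OF finZ, of "\<lambda>S. (\<Prod>i\<in>S. a i) * Esg s S" "\<lambda>S. s ` S = S"] by simp
  finally show ?thesis .
qed

lemma sum_Zc:
  assumes I: "finite I" "\<And>i. R i \<Longrightarrow> i \<le> n \<Longrightarrow> i \<in> I" "\<And>i. i \<in> I \<Longrightarrow> R i"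
  shows "(\<Sum>S\<in>{S \<in> Zc n R. Q S}. f S) = (\<Sum>i\<in>I. \<Sum>S\<in>{S. S \<subseteq> {..<n} \<and> card S = i \<and> Q S}. (f S :: 'a::comm_monoid_add))"
proof -
  define A where "A i = {S. S \<subseteq> {..<n} \<and> card S = i \<and> Q S}" for i
  have "{S \<in> Zc n R. Q S} = (\<Union>i\<in>I. A i)"
  proof
    show "{S \<in> Zc n R. Q S} \<subseteq> (\<Union>i\<in>I. A i)"
    proof
      fix S assume S: "S \<in> {S \<in> Zc n R. Q S}"
      then have "card S \<le> n" using card_mono[of "{..<n}" S] by (auto simp: Zc_def)
      then have "card S \<in> I" using S I(2) by (auto simp: Zc_def)
      then show "S \<in> (\<Union>i\<in>I. A i)" using S by (auto simp: A_def Zc_def)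
    qed
    show "(\<Union>i\<in>I. A i) \<subseteq> {S \<in> Zc n R. Q S}" using I(3) by (auto simp: A_def Zc_def)
  qed
  moreover have "sum f (\<Union>i\<in>I. A i) = (\<Sum>i\<in>I. sum f (A i))"
  proof (rule sum.UNION_disjoint[OF I(1)])
    show "\<forall>i\<in>I. finite (A i)"
    proof
      fix i show "finite (A i)" by (rule finite_subset[of _ "Pow {..<n}"]) (auto simp: A_def)
    qed
    show "\<forall>i\<in>I. \<forall>j\<in>I. i \<noteq> j \<longrightarrow> A i \<inter> A j = {}" by (auto simp: A_def)
  qed
  ultimately show ?thesis by (simp add: A_def)
qed

lemma card_Zc:
  assumes I: "finite I" "\<And>i. R i \<Longrightarrow> i \<le> n \<Longrightarrow> i \<in> I" "\<And>i. i \<in> I \<Longrightarrow> R i"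
  shows "card (Zc n R) = (\<Sum>i\<in>I. n choose i)"
proof -
  have "card (Zc n R) = (\<Sum>S\<in>{S \<in> Zc n R. True}. (1::nat))" by simp
  also have "\<dots> = (\<Sum>i\<in>I. \<Sum>S\<in>{S. S \<subseteq> {..<n} \<and> card S = i \<and> True}. (1::nat))"
    by (rule sum_Zc[OF I])
  also have "\<dots> = (\<Sum>i\<in>I. n choose i)"
    using n_subsets[of "{..<n}"] by simp
  finally show ?thesis .
qed

lemma chi_Zc:
  fixes a :: "nat \<Rightarrow> 'f::field"
  assumes I: "finite I" "\<And>i. R i \<Longrightarrow> i \<le> n \<Longrightarrow> i \<in> I" "\<And>i. i \<in> I \<Longrightarrow> R i"
    and s: "s permutes {..<n}"
  shows "(\<Sum>S\<in>{S \<in> Zc n R. s ` S = S}. (\<Prod>i\<in>S. a i) * Esg s S) = (\<Sum>i\<in>I. chi_row_col n i a s)"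
proof -
  have "(\<Sum>S\<in>{S \<in> Zc n R. s ` S = S}. (\<Prod>i\<in>S. a i) * Esg s S) =
      (\<Sum>i\<in>I. \<Sum>S\<in>{S. S \<subseteq> {..<n} \<and> card S = i \<and> s ` S = S}. (\<Prod>i\<in>S. a i) * Esg s S)"
    by (rule sum_Zc[OF I])
  also have "\<dots> = (\<Sum>i\<in>I. chi_row_col n i a s)"
    unfolding chi_row_col_def
    by (intro sum.cong refl) (auto simp: Esg_sign_on[OF s])
  finally show ?thesis .
qed

lemma Zc_False: "Zc n (\<lambda>i. False) = {}"
  by (simp add: Zc_def)

lemma Zc_diff: "Zc n P' - Zc n P = Zc n (\<lambda>i. P' i \<and> \<not> P i)"
  by (auto simp: Zc_def)

lemma CPG_eq:
  assumes "t = 2*k \<or> t = 2*k+1" "1 \<le> k"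
  shows "CPG TYPE('f::field_char_0) t n = (K n (Zc n (\<lambda>i. odd i \<and> i \<le> 2*k)) :: 'f mpoly set)"
  using CP_char[OF assms, of n, where 'f='f] by (simp add: CPG_def Zc_def)

lemma IdPG_eq: "IdPG TYPE('f::field) t n = (K n (Zc n (\<lambda>i. i \<le> t)) :: 'f mpoly set)"
  using IdP_char[of t n, where 'f='f] by (simp add: IdPG_def Zc_def)

lemma Pgr_eq: "Pgr n = K n (Zc n (\<lambda>i. False))"
  by (simp add: Zc_False K_empty)

lemma main_t:
  assumes t: "t = 2*k \<or> t = 2*k+1" "1 \<le> k"
  shows "cgrz TYPE('f::field_char_0) t n = card (Zc n (\<lambda>i. odd i \<and> i \<le> 2*k))"
    and "deltagr TYPE('f) t n = card (Zc n (\<lambda>i. i \<le> t \<and> \<not> (odd i \<and> i \<le> 2*k)))"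
    and "s permutes {..<n} \<Longrightarrow> chigrz t n (a :: nat \<Rightarrow> 'f) s =
           (\<Sum>S\<in>{S \<in> Zc n (\<lambda>i. odd i \<and> i \<le> 2*k). s ` S = S}. (\<Prod>i\<in>S. a i) * Esg s S)"
    and "s permutes {..<n} \<Longrightarrow> chiDelta t n (a :: nat \<Rightarrow> 'f) s =
           (\<Sum>S\<in>{S \<in> Zc n (\<lambda>i. i \<le> t \<and> \<not> (odd i \<and> i \<le> 2*k)). s ` S = S}. (\<Prod>i\<in>S. a i) * Esg s S)"
proof -
  let ?Qc = "\<lambda>i. odd i \<and> i \<le> 2*k" and ?Qi = "\<lambda>i. i \<le> t" and ?F = "\<lambda>i::nat. False"
  have sub1: "Zc n ?F \<subseteq> Zc n ?Qc" "Zc n ?Qc \<subseteq> Pow {..<n}" by (auto simp: Zc_def)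
  have sub2: "Zc n ?Qc \<subseteq> Zc n ?Qi" "Zc n ?Qi \<subseteq> Pow {..<n}" using t by (auto simp: Zc_def)
  have d1: "pv.dim (K n (Zc n ?F) :: 'f mpoly set) = pv.dim (K n (Zc n ?Qc) :: 'f mpoly set) + card (Zc n ?Qc - Zc n ?F)"
    by (rule K_dim[OF sub1])
  have d2: "pv.dim (K n (Zc n ?Qc) :: 'f mpoly set) = pv.dim (K n (Zc n ?Qi) :: 'f mpoly set) + card (Zc n ?Qi - Zc n ?Qc)"
    by (rule K_dim[OF sub2])
  show "cgrz TYPE('f) t n = card (Zc n ?Qc)"
    unfolding cgrz_def qdim_def CPG_eq[OF t, where 'f='f] Pgr_eq d1 by (simp add: Zc_False)
  show "deltagr TYPE('f) t n = card (Zc n (\<lambda>i. i \<le> t \<and> \<not> (odd i \<and> i \<le> 2*k)))"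
    unfolding deltagr_def qdim_def CPG_eq[OF t, where 'f='f] IdPG_eq d2 by (simp add: Zc_diff)
  assume s: "s permutes {..<n}"
  show "chigrz t n a s = (\<Sum>S\<in>{S \<in> Zc n ?Qc. s ` S = S}. (\<Prod>i\<in>S. a i) * Esg s S)"
  proof -
    have "trace_on (K n (Zc n ?F)) (act a s n) = trace_on (K n (Zc n ?Qc)) (act a s n)
       + (\<Sum>S\<in>{S \<in> Zc n ?Qc - Zc n ?F. s ` S = S}. (\<Prod>i\<in>S. a i) * Esg s S)"
      by (rule K_trace[OF s]) auto
    then show ?thesis unfolding chigrz_def qchar_def CPG_eq[OF t, where 'f='f] Pgr_eq by (simp add: Zc_False)
  qed
  show "chiDelta t n a s = (\<Sum>S\<in>{S \<in> Zc n (\<lambda>i. i \<le> t \<and> \<not> (odd i \<and> i \<le> 2*k)). s ` S = S}. (\<Prod>i\<in>S. a i) * Esg s S)"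
  proof -
    have "trace_on (K n (Zc n ?Qc)) (act a s n) = trace_on (K n (Zc n ?Qi)) (act a s n)
       + (\<Sum>S\<in>{S \<in> Zc n ?Qi - Zc n ?Qc. s ` S = S}. (\<Prod>i\<in>S. a i) * Esg s S)"
      by (rule K_trace[OF s]) (use t in auto)
    then show ?thesis unfolding chiDelta_def qchar_def CPG_eq[OF t, where 'f='f] IdPG_eq by (simp add: Zc_diff)
  qed
qed

theorem theorem5p4:
  fixes k n :: nat
  assumes "k \<ge> 1" and "n \<ge> 1"
  shows
    "cgrz TYPE('f::field_char_0) (2*k) n = (\<Sum>i | 1 \<le> i \<and> i \<le> 2*k \<and> odd i. n choose i)
     \<and> cgrz TYPE('f) (2*k+1) n = (\<Sum>i | 1 \<le> i \<and> i \<le> 2*k \<and> odd i. n choose i)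
     \<and> deltagr TYPE('f) (2*k) n = (\<Sum>i | i \<le> 2*k \<and> even i. n choose i)
     \<and> deltagr TYPE('f) (2*k+1) n = (n choose (2*k+1)) + deltagr TYPE('f) (2*k) n
     \<and> (\<forall>(a :: nat \<Rightarrow> 'f) sigma. (\<forall>j<n. a j = 1 \<or> a j = -1) \<longrightarrow> sigma permutes {..<n} \<longrightarrow>
          chigrz (2*k) n a sigma = (\<Sum>i | 1 \<le> i \<and> i \<le> 2*k \<and> odd i. chi_row_col n i a sigma)
        \<and> chigrz (2*k+1) n a sigma = (\<Sum>i | 1 \<le> i \<and> i \<le> 2*k \<and> odd i. chi_row_col n i a sigma)
        \<and> chiDelta (2*k) n a sigma = (\<Sum>i | i \<le> 2*k \<and> even i. chi_row_col n i a sigma)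
        \<and> chiDelta (2*k+1) n a sigma
            = chi_row_col n (2*k+1) a sigma + (\<Sum>i | i \<le> 2*k \<and> even i. chi_row_col n i a sigma))"
proof -
  have t0: "2*k = 2*k \<or> 2*k = 2*k+1" and t1: "2*k+1 = 2*k \<or> 2*k+1 = 2*k+1" by simp_all
  define Ic where "Ic = {i. 1 \<le> i \<and> i \<le> 2*k \<and> odd i}"
  define Ie where "Ie = {i. i \<le> 2*k \<and> even i}"
  have finI: "finite Ic" "finite Ie" by (auto simp: Ic_def Ie_def)
  have Ic1: "\<And>i. odd i \<and> i \<le> 2*k \<Longrightarrow> i \<le> n \<Longrightarrow> i \<in> Ic" "\<And>i. i \<in> Ic \<Longrightarrow> odd i \<and> i \<le> 2*k"
    by (auto simp: Ic_def odd_pos Suc_leI)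
  have Ie1: "\<And>i. i \<le> 2*k \<and> \<not> (odd i \<and> i \<le> 2*k) \<Longrightarrow> i \<le> n \<Longrightarrow> i \<in> Ie"
      "\<And>i. i \<in> Ie \<Longrightarrow> i \<le> 2*k \<and> \<not> (odd i \<and> i \<le> 2*k)"
    by (auto simp: Ie_def)
  have nIe: "2*k+1 \<notin> Ie" by (simp add: Ie_def)
  have Io1: "\<And>i. i \<le> 2*k+1 \<and> \<not> (odd i \<and> i \<le> 2*k) \<Longrightarrow> i \<le> n \<Longrightarrow> i \<in> insert (2*k+1) Ie"
      "\<And>i. i \<in> insert (2*k+1) Ie \<Longrightarrow> i \<le> 2*k+1 \<and> \<not> (odd i \<and> i \<le> 2*k)"
  proof -
    fix i assume "i \<le> 2*k+1 \<and> \<not> (odd i \<and> i \<le> 2*k)"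
    then have "i = 2*k+1 \<or> (i \<le> 2*k \<and> even i)" by presburger
    then show "i \<in> insert (2*k+1) Ie" unfolding Ie_def by auto
  next
    fix i assume "i \<in> insert (2*k+1) Ie"
    then show "i \<le> 2*k+1 \<and> \<not> (odd i \<and> i \<le> 2*k)" unfolding Ie_def by auto
  qed
  have finIo: "finite (insert (2*k+1) Ie)" using finI by simp
  have SIc: "(\<Sum>i | 1 \<le> i \<and> i \<le> 2*k \<and> odd i. g i) = (\<Sum>i\<in>Ic. g i)" for g :: "nat \<Rightarrow> 'b::comm_monoid_add"
    by (simp add: Ic_def)
  have SIe: "(\<Sum>i | i \<le> 2*k \<and> even i. g i) = (\<Sum>i\<in>Ie. g i)" for g :: "nat \<Rightarrow> 'b::comm_monoid_add"
    by (simp add: Ie_def)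
  have c0: "cgrz TYPE('f) (2*k) n = (\<Sum>i\<in>Ic. n choose i)"
  proof -
    have "cgrz TYPE('f) (2*k) n = card (Zc n (\<lambda>i. odd i \<and> i \<le> 2*k))" by (rule main_t(1)[OF t0 assms(1)])
    also have "\<dots> = (\<Sum>i\<in>Ic. n choose i)" by (rule card_Zc[OF finI(1) Ic1])
    finally show ?thesis .
  qed
  have c1: "cgrz TYPE('f) (2*k+1) n = (\<Sum>i\<in>Ic. n choose i)"
  proof -
    have "cgrz TYPE('f) (2*k+1) n = card (Zc n (\<lambda>i. odd i \<and> i \<le> 2*k))" by (rule main_t(1)[OF t1 assms(1)])
    also have "\<dots> = (\<Sum>i\<in>Ic. n choose i)" by (rule card_Zc[OF finI(1) Ic1])
    finally show ?thesis .
  qed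
  have d0: "deltagr TYPE('f) (2*k) n = (\<Sum>i\<in>Ie. n choose i)"
  proof -
    have "deltagr TYPE('f) (2*k) n = card (Zc n (\<lambda>i. i \<le> 2*k \<and> \<not> (odd i \<and> i \<le> 2*k)))" by (rule main_t(2)[OF t0 assms(1)])
    also have "\<dots> = (\<Sum>i\<in>Ie. n choose i)" by (rule card_Zc[OF finI(2) Ie1])
    finally show ?thesis .
  qed
  have d1: "deltagr TYPE('f) (2*k+1) n = (n choose (2*k+1)) + (\<Sum>i\<in>Ie. n choose i)"
  proof -
    have "deltagr TYPE('f) (2*k+1) n = card (Zc n (\<lambda>i. i \<le> 2*k+1 \<and> \<not> (odd i \<and> i \<le> 2*k)))" by (rule main_t(2)[OF t1 assms(1)])
    also have "\<dots> = (\<Sum>i\<in>insert (2*k+1) Ie. n choose i)" by (rule card_Zc[OF finIo Io1])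
    also have "\<dots> = (n choose (2*k+1)) + (\<Sum>i\<in>Ie. n choose i)" by (rule sum.insert[OF finI(2) nIe])
    finally show ?thesis .
  qed
  show ?thesis
    unfolding Ic_def[symmetric] Ie_def[symmetric]
  proof (intro conjI allI impI)
    show "cgrz TYPE('f) (2*k) n = (\<Sum>i\<in>Ic. n choose i)" by (rule c0)
    show "cgrz TYPE('f) (2*k+1) n = (\<Sum>i\<in>Ic. n choose i)" by (rule c1)
    show "deltagr TYPE('f) (2*k) n = (\<Sum>i\<in>Ie. n choose i)" by (rule d0)
    show "deltagr TYPE('f) (2*k+1) n = (n choose (2*k+1)) + deltagr TYPE('f) (2*k) n" unfolding d0 by (rule d1)
    fix a :: "nat \<Rightarrow> 'f" and sigma :: "nat \<Rightarrow> nat"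
    assume s: "sigma permutes {..<n}"
    show "chigrz (2*k) n a sigma = (\<Sum>i\<in>Ic. chi_row_col n i a sigma)"
      using main_t(3)[OF t0 assms(1) s, where a=a] chi_Zc[OF finI(1) Ic1 s, where a=a] by (rule trans)
    show "chigrz (2*k+1) n a sigma = (\<Sum>i\<in>Ic. chi_row_col n i a sigma)"
      using main_t(3)[OF t1 assms(1) s, where a=a] chi_Zc[OF finI(1) Ic1 s, where a=a] by (rule trans)
    show "chiDelta (2*k) n a sigma = (\<Sum>i\<in>Ie. chi_row_col n i a sigma)"
      using main_t(4)[OF t0 assms(1) s, where a=a] chi_Zc[OF finI(2) Ie1 s, where a=a] by (rule trans)
    have "chiDelta (2*k+1) n a sigma = (\<Sum>i\<in>insert (2*k+1) Ie. chi_row_col n i a sigma)"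
      using main_t(4)[OF t1 assms(1) s, where a=a] chi_Zc[OF finIo Io1 s, where a=a] by (rule trans)
    also have "\<dots> = chi_row_col n (2*k+1) a sigma + (\<Sum>i\<in>Ie. chi_row_col n i a sigma)"
      by (rule sum.insert[OF finI(2) nIe])
    finally show "chiDelta (2*k+1) n a sigma = chi_row_col n (2*k+1) a sigma + (\<Sum>i\<in>Ie. chi_row_col n i a sigma)" .
  qed
qed

end
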